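(* Let $k\ge2$, $L\ge3$, and let $T:\Pi_L\to\Sigma_k$ be the map constructed below (with $\Pi=\Pi_L$). Let $y\in Trans(\Pi_L)$ and $i\in\{1,\dots,6\}$. If $y$ satisfies Case $(i)$ in $\Pi_L$, then $T(y)$ satisfies Case $(i')$ in $\Sigma_k$.
   Context: $\Sigma_k=\{0,\dots,k-1\}^{\mathbb{N}}$ with metric $d(x,y)=\sum_{n\ge1}\delta(x_n,y_n)/2^n$ ($\delta(a,b)=0$ if $a=b$, $1$ otherwise) and shift $\sigma$. $\Pi_L=\{x\in\Sigma_k:$ no $L$ consecutive symbols of $x$ are all equal$\}$; $Trans(\Pi_L)=\{y\in\Pi_L:\omega_\sigma(y)=\Pi_L\}$. A finite word is contained in $\Pi$ if it is a prefix of some point of $\Pi$. Construction of $T$: enumerate all finite words contained in $\Pi$ as $C_1,C_2,\dots$; fix a finite word $A_1$ not contained in $\Pi$; for $y\in\Pi$ let $Y_n$ be its first $n$ symbols; $B_n=C_nY_n\cdots Y_n$ ($Y_n$ repeated $|A_n|^2$ times), $A_{n+1}=A_nB_nA_n$; $T(y)$ is the point having every $A_n$ as prefix; the construction requires $|C_n|=o(|A_n|)$. $N(x,U)=\{n\ge1:\sigma^nx\in U\}$; $\overline d,\underline d$ upper/lower asymptotic densities, $B^*,B_*$ Banach upper/lower densities; $\omega_\xi(x)=\{z:\xi(N(x,B_\varepsilon(z)))>0\ \forall\varepsilon>0\}$; $\omega_\sigma$ the $\omega$-limit set. Writing $\omega_\xi$ for $\omega_\xi(x)$: Case (1) $\omega_{B_*}\subsetneq\omega_{\underline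 d}=\omega_{\overline d}=\omega_{B^*}=\omega_\sigma$; (2) $\omega_{B_*}\subsetneq\omega_{\underline d}=\omega_{\overline d}\subsetneq\omega_{B^*}=\omega_\sigma$; (3) $\omega_{B_*}=\omega_{\underline d}\subsetneq\omega_{\overline d}=\omega_{B^*}=\omega_\sigma$; (4) $\omega_{B_*}\subsetneq\omega_{\underline d}\subsetneq\omega_{\overline d}=\omega_{B^*}=\omega_\sigma$; (5) $\omega_{B_*}=\omega_{\underline d}\subsetneq\omega_{\overline d}\subsetneq\omega_{B^*}=\omega_\sigma$; (6) $\omega_{B_*}\subsetneq\omega_{\underline d}\subsetneq\omega_{\overline d}\subsetneq\omega_{B^*}=\omega_\sigma$. Case $(i')$ is Case $(i)$ with the final equality $\omega_{B^*}=\omega_\sigma$ replaced by the strict inclusion $\omega_{B^*}\subsetneq\omega_\sigma$. *)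

theory Defs
  imports "HOL-Analysis.Analysis"
begin

text \<open>Points of the full shift are sequences \<open>x :: nat \<Rightarrow> nat\<close>; the paper's
  \<open>x = x\<^sub>1 x\<^sub>2 \<dots>\<close> corresponds to \<open>x 0, x 1, \<dots>\<close>.\<close>

definition FullShift :: "nat \<Rightarrow> (nat \<Rightarrow> nat) set" where
  "FullShift k = {x. \<forall>n. x n < k}"

definition sdist :: "(nat \<Rightarrow> nat) \<Rightarrow> (nat \<Rightarrow> nat) \<Rightarrow> real" where
  "sdist x y = (\<Sum>n. (if x n = y n then 0 else 1) / 2 ^ (Suc n))"

definition shift :: "(nat \<Rightarrow> nat) \<Rightarrow> (nat \<Rightarrow> nat)" where
  "shift x = (\<lambda>n. x (Suc n))"

definition PiL :: "nat \<Rightarrow> nat \<Rightarrow> (nat \<Rightarrow> nat) set" where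
  "PiL k L = {x \<in> FullShift k. \<not> (\<exists>n. \<forall>j<L. x (n + j) = x n)}"

definition sball :: "(nat \<Rightarrow> nat) set \<Rightarrow> (nat \<Rightarrow> nat) \<Rightarrow> real \<Rightarrow> (nat \<Rightarrow> nat) set" where
  "sball X z e = {w \<in> X. sdist w z < e}"

definition visits :: "(nat \<Rightarrow> nat) \<Rightarrow> (nat \<Rightarrow> nat) set \<Rightarrow> nat set" where
  "visits x U = {n. n \<ge> 1 \<and> (shift ^^ n) x \<in> U}"

definition omega_lim :: "(nat \<Rightarrow> nat) set \<Rightarrow> (nat \<Rightarrow> nat) \<Rightarrow> (nat \<Rightarrow> nat) set" where
  "omega_lim X x = {z \<in> X. \<forall>e>0. infinite (visits x (sball X z e))}"

definition Trans :: "(nat \<Rightarrow> nat) set \<Rightarrow> (nat \<Rightarrow> nat) set" where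
  "Trans X = {y \<in> X. omega_lim X y = X}"

definition upper_dens :: "nat set \<Rightarrow> ereal" where
  "upper_dens A = limsup (\<lambda>n. ereal (real (card (A \<inter> {1..n})) / real n))"

definition lower_dens :: "nat set \<Rightarrow> ereal" where
  "lower_dens A = liminf (\<lambda>n. ereal (real (card (A \<inter> {1..n})) / real n))"

text \<open>Banach densities: \<open>lim\<^sub>n sup\<^sub>m |A \<inter> [m+1,m+n]|/n\<close> and
  \<open>lim\<^sub>n inf\<^sub>m |A \<inter> [m+1,m+n]|/n\<close> (these limits exist).\<close>
definition banach_upper :: "nat set \<Rightarrow> ereal" where
  "banach_upper A = lim (\<lambda>n. SUP m. ereal (real (card (A \<inter> {m+1..m+n})) / real n))"

definition banach_lower :: "nat set \<Rightarrow> ereal" where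
  "banach_lower A = lim (\<lambda>n. INF m. ereal (real (card (A \<inter> {m+1..m+n})) / real n))"

definition omega_xi :: "(nat \<Rightarrow> nat) set \<Rightarrow> (nat set \<Rightarrow> ereal) \<Rightarrow> (nat \<Rightarrow> nat) \<Rightarrow> (nat \<Rightarrow> nat) set" where
  "omega_xi X \<xi> x = {z \<in> X. \<forall>e>0. \<xi> (visits x (sball X z e)) > 0}"

definition rel_step :: "bool \<Rightarrow> 'a set \<Rightarrow> 'a set \<Rightarrow> bool" where
  "rel_step strict A B = (if strict then A \<subset> B else A = B)"

text \<open>Pattern of the first three relations in Cases (1)--(6); True = strict inclusion.\<close>
fun case_pattern :: "nat \<Rightarrow> bool \<times> bool \<times> bool" where
  "case_pattern i =
    (if i = 1 then (True, False, False)
     else if i = 2 then (True, False, True)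
     else if i = 3 then (False, True, False)
     else if i = 4 then (True, True, False)
     else if i = 5 then (False, True, True)
     else (True, True, True))"

text \<open>\<open>sat_case X x i primed\<close>: \<open>x\<close> satisfies Case (i) (primed: Case (i')) in \<open>X\<close>.\<close>
definition sat_case :: "(nat \<Rightarrow> nat) set \<Rightarrow> (nat \<Rightarrow> nat) \<Rightarrow> nat \<Rightarrow> bool \<Rightarrow> bool" where
  "sat_case X x i primed =
    (case case_pattern i of (r1, r2, r3) \<Rightarrow>
       rel_step r1 (omega_xi X banach_lower x) (omega_xi X lower_dens x) \<and>
       rel_step r2 (omega_xi X lower_dens x) (omega_xi X upper_dens x) \<and>
       rel_step r3 (omega_xi X upper_dens x) (omega_xi X banach_upper x) \<and>
       rel_step primed (omega_xi X banach_upper x) (omega_lim X x))"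

definition contained :: "(nat \<Rightarrow> nat) set \<Rightarrow> nat list \<Rightarrow> bool" where
  "contained P w = (\<exists>x\<in>P. \<forall>i<length w. x i = w ! i)"

text \<open>\<open>Aw C A1 y m\<close> is the word \<open>A\<^sub>m\<^sub>+\<^sub>1\<close>; \<open>C n\<close> is \<open>C\<^sub>n\<close> (n \<ge> 1);
  \<open>Y\<^sub>n = map y [0..<n]\<close>; \<open>B\<^sub>n = C\<^sub>n Y\<^sub>n\<dots>Y\<^sub>n\<close> with \<open>|A\<^sub>n|\<^sup>2\<close> copies.\<close>
primrec Aw :: "(nat \<Rightarrow> nat list) \<Rightarrow> nat list \<Rightarrow> (nat \<Rightarrow> nat) \<Rightarrow> nat \<Rightarrow> nat list" where
  "Aw C A1 y 0 = A1"
| "Aw C A1 y (Suc m) =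
     Aw C A1 y m @ (C (Suc m) @ concat (replicate ((length (Aw C A1 y m))\<^sup>2) (map y [0..<Suc m])))
       @ Aw C A1 y m"

definition Tmap :: "(nat \<Rightarrow> nat list) \<Rightarrow> nat list \<Rightarrow> (nat \<Rightarrow> nat) \<Rightarrow> (nat \<Rightarrow> nat)" where
  "Tmap C A1 y = (THE z. \<forall>m. \<forall>i<length (Aw C A1 y m). z i = Aw C A1 y m ! i)"

end

theory Submission
  imports Defs
begin

lemma shift_pow: "(shift ^^ n) x i = x (n + i)"
  by (induction n arbitrary: i) (auto simp: shift_def)

definition V :: "(nat \<Rightarrow> nat) \<Rightarrow> (nat \<Rightarrow> nat) \<Rightarrow> nat \<Rightarrow> nat set" where
  "V x z m = {n. 1 \<le> n \<and> (\<forall>i<m. x (n + i) = z i)}"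

lemma sdist_term_le: "(if x n = y n then 0 else 1) / 2 ^ (Suc n) \<le> ((1::real)/2) ^ (Suc n)"
  by (simp add: power_divide)

lemma sdist_summable: "summable (\<lambda>n. (if x n = y n then 0 else 1) / (2::real) ^ (Suc n))"
proof (rule summable_comparison_test[where g = "\<lambda>n. ((1::real)/2) ^ (Suc n)"])
  show "\<exists>N. \<forall>n\<ge>N. norm ((if x n = y n then 0 else 1) / (2::real) ^ (Suc n)) \<le> (1/2) ^ Suc n"
    by (auto simp: power_divide)
  show "summable (\<lambda>n. ((1::real)/2) ^ Suc n)"
    by (subst summable_Suc_iff) (simp add: summable_geometric)
qed

lemma sdist_small_agree:
  assumes "sdist w z < (1/2) ^ m" "i < m"
  shows "w i = z i"
proof (rule ccontr)
  assume ne: "w i \<noteq> z i"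
  let ?f = "\<lambda>n. (if w n = z n then 0 else 1) / (2::real) ^ (Suc n)"
  have "sum ?f {i} \<le> suminf ?f"
    by (rule sum_le_suminf[OF sdist_summable]) auto
  then have "?f i \<le> suminf ?f" by simp
  moreover have "?f i = (1/2) ^ Suc i" using ne by (simp add: power_divide)
  moreover have "((1::real)/2) ^ m \<le> (1/2) ^ Suc i"
    using assms(2) by (intro power_decreasing) auto
  ultimately show False using assms(1) unfolding sdist_def by linarith
qed

lemma sdist_agree_small:
  assumes "\<And>i. i \<le> m \<Longrightarrow> w i = z i"
  shows "sdist w z < (1/2) ^ m"
proof -
  let ?f = "\<lambda>n. (if w n = z n then 0 else 1) / (2::real) ^ (Suc n)"
  have s: "summable ?f" by (rule sdist_summable)
  have "suminf ?f = (\<Sum>n. ?f (n + Suc m)) + (\<Sum>i<Suc m. ?f i)"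
    by (rule suminf_split_initial_segment[OF s])
  moreover have "(\<Sum>i<Suc m. ?f i) = 0" using assms by simp
  moreover have "(\<Sum>n. ?f (n + Suc m)) \<le> (\<Sum>n. ((1::real)/2) ^ (n + Suc m + 1))"
  proof (rule suminf_le)
    show "summable (\<lambda>n. ?f (n + Suc m))" using s by (rule summable_ignore_initial_segment)
    show "summable (\<lambda>n. ((1::real)/2) ^ (n + Suc m + 1))"
      unfolding power_add by (intro summable_mult2 summable_geometric) simp
    show "\<And>n. ?f (n + Suc m) \<le> (1/2) ^ (n + Suc m + 1)"
      by (auto simp: power_divide)
  qed
  moreover have "(\<Sum>n. ((1::real)/2) ^ (n + Suc m + 1)) = (1/2) ^ (Suc m)"
  proof -
    have "(\<Sum>n. ((1::real)/2) ^ (n + Suc m + 1)) = (\<Sum>n. ((1/2) ^ n) * (1/2) ^ (Suc m + 1))"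
      by (simp add: power_add)
    also have "\<dots> = (\<Sum>n. (1/2::real) ^ n) * (1/2) ^ (Suc m + 1)"
      by (rule suminf_mult2[symmetric]) (intro summable_geometric, simp)
    also have "\<dots> = (1/2) ^ Suc m" by (simp add: suminf_geometric)
    finally show ?thesis .
  qed
  ultimately have "sdist w z \<le> (1/2) ^ Suc m" unfolding sdist_def by linarith
  also have "\<dots> < (1/2) ^ m" by simp
  finally show ?thesis .
qed

lemma visits_ball_sub:
  assumes "e \<le> (1/2) ^ m"
  shows "visits x (sball X z e) \<subseteq> V x z m"
proof
  fix n assume "n \<in> visits x (sball X z e)"
  then have "1 \<le> n" "sdist ((shift ^^ n) x) z < (1/2)^m"
    unfolding visits_def sball_def using assms by auto
  then show "n \<in> V x z m" unfolding V_def
    using sdist_small_agree[of "(shift ^^ n) x" z m] by (auto simp: shift_pow)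
qed

lemma V_sub_visits:
  assumes "\<And>n. (shift ^^ n) x \<in> X" "(1/2) ^ m \<le> e"
  shows "V x z (Suc m) \<subseteq> visits x (sball X z e)"
proof
  fix n assume "n \<in> V x z (Suc m)"
  then have "1 \<le> n" "\<And>i. i \<le> m \<Longrightarrow> (shift ^^ n) x i = z i"
    unfolding V_def by (auto simp: shift_pow)
  then have "sdist ((shift ^^ n) x) z < (1/2) ^ m" using sdist_agree_small by blast
  with assms \<open>1 \<le> n\<close> show "n \<in> visits x (sball X z e)"
    unfolding visits_def sball_def by auto
qed

lemma omega_char:
  assumes mono: "\<And>A B. A \<subseteq> B \<Longrightarrow> \<xi> A > 0 \<Longrightarrow> \<xi> B > 0"
    and inX: "\<And>n. (shift ^^ n) x \<in> X"
  shows "omega_xi X \<xi> x = {z \<in> X. \<forall>m. \<xi> (V x z m) > 0}"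
proof (intro set_eqI iffI)
  fix z assume z: "z \<in> omega_xi X \<xi> x"
  show "z \<in> {z \<in> X. \<forall>m. \<xi> (V x z m) > 0}"
  proof (safe)
    show "z \<in> X" using z unfolding omega_xi_def by auto
    fix m
    have "\<xi> (visits x (sball X z ((1/2)^m))) > 0" using z unfolding omega_xi_def by auto
    then show "\<xi> (V x z m) > 0" by (rule mono[OF visits_ball_sub, rotated]) simp
  qed
next
  fix z assume z: "z \<in> {z \<in> X. \<forall>m. \<xi> (V x z m) > 0}"
  show "z \<in> omega_xi X \<xi> x" unfolding omega_xi_def
  proof (safe)
    show "z \<in> X" using z by auto
    fix e :: real assume "e > 0"
    then obtain m where m: "(1/2::real) ^ m < e"
      using real_arch_pow_inv[of e "1/2"] by auto
    have "\<xi> (V x z (Suc m)) > 0" using z by auto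
    then show "\<xi> (visits x (sball X z e)) > 0"
      by (rule mono[OF V_sub_visits[OF inX], rotated]) (use m in simp)
  qed
qed

subsection \<open>Asymptotic densities\<close>

lemma dens_seq_bounds: "0 \<le> real (card (A \<inter> {1..n})) / real n" "real (card (A \<inter> {1..n})) / real n \<le> 1"
proof -
  show "0 \<le> real (card (A \<inter> {1..n})) / real n" by simp
  have "card (A \<inter> {1..n}) \<le> card {1..n}" by (rule card_mono) auto
  then have "card (A \<inter> {1..n}) \<le> n" by simp
  then show "real (card (A \<inter> {1..n})) / real n \<le> 1"
    by (cases "n = 0") (auto simp: divide_le_eq)
qed

lemma lower_pos_iff:
  "lower_dens A > 0 \<longleftrightarrow> (\<exists>g>0. \<exists>N. \<forall>n\<ge>N. g * real n \<le> real (card (A \<inter> {1..n})))"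
proof
  let ?f = "\<lambda>n. ereal (real (card (A \<inter> {1..n})) / real n)"
  assume pos: "lower_dens A > 0"
  have "0 < min (lower_dens A) 1" using pos by simp
  then obtain g where g: "0 < ereal g" "ereal g < min (lower_dens A) 1"
    using ereal_dense2 by blast
  then have "ereal g < liminf ?f" unfolding lower_dens_def by simp
  then have ev: "eventually (\<lambda>n. ereal g < ?f n) sequentially" by (rule less_LiminfD)
  then obtain N where N: "\<And>n. n \<ge> N \<Longrightarrow> ereal g < ?f n" by (auto simp: eventually_sequentially)
  have "\<forall>n\<ge>N. g * real n \<le> real (card (A \<inter> {1..n}))"
  proof (intro allI impI)
    fix n assume "n \<ge> N"
    then have lt: "g < real (card (A \<inter> {1..n})) / real n" using N by simp
    show "g * real n \<le> real (card (A \<inter> {1..n}))"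
    proof (cases "n = 0")
      case True then show ?thesis using lt g by simp
    next
      case False then show ?thesis using lt by (simp add: less_divide_eq)
    qed
  qed
  with g show "\<exists>g>0. \<exists>N. \<forall>n\<ge>N. g * real n \<le> real (card (A \<inter> {1..n}))" by auto
next
  assume "\<exists>g>0. \<exists>N. \<forall>n\<ge>N. g * real n \<le> real (card (A \<inter> {1..n}))"
  then obtain g N where g: "g > 0" and N: "\<And>n. n \<ge> N \<Longrightarrow> g * real n \<le> real (card (A \<inter> {1..n}))"
    by auto
  have "eventually (\<lambda>n. ereal g \<le> ereal (real (card (A \<inter> {1..n})) / real n)) sequentially"
    unfolding eventually_sequentially
  proof (intro exI[of _ "max N 1"] allI impI)
    fix n assume "max N 1 \<le> n"
    then show "ereal g \<le> ereal (real (card (A \<inter> {1..n})) / real n)"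
      using N[of n] by (simp add: le_divide_eq)
  qed
  then have "ereal g \<le> lower_dens A" unfolding lower_dens_def by (rule Liminf_bounded)
  then show "lower_dens A > 0" using g by (meson ereal_less(2) less_le_trans zero_ereal_def)
qed

lemma upper_pos_iff:
  "upper_dens A > 0 \<longleftrightarrow> (\<exists>g>0. \<forall>N. \<exists>n\<ge>N. g * real n \<le> real (card (A \<inter> {1..n})))"
proof
  let ?f = "\<lambda>n. ereal (real (card (A \<inter> {1..n})) / real n)"
  assume pos: "upper_dens A > 0"
  have "0 < min (upper_dens A) 1" using pos by simp
  then obtain g where g: "0 < ereal g" "ereal g < min (upper_dens A) 1"
    using ereal_dense2 by blast
  then have gl: "ereal g < limsup ?f" unfolding upper_dens_def by simp
  have "\<forall>N. \<exists>n\<ge>N. g * real n \<le> real (card (A \<inter> {1..n}))"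
  proof (rule ccontr)
    assume "\<not> (\<forall>N. \<exists>n\<ge>N. g * real n \<le> real (card (A \<inter> {1..n})))"
    then obtain N where N: "\<And>n. n \<ge> N \<Longrightarrow> real (card (A \<inter> {1..n})) < g * real n"
      by (meson not_le)
    have "eventually (\<lambda>n. ?f n \<le> ereal g) sequentially"
      unfolding eventually_sequentially
    proof (intro exI[of _ "max N 1"] allI impI)
      fix n assume "max N 1 \<le> n"
      then show "?f n \<le> ereal g" using N[of n] by (simp add: divide_le_eq)
    qed
    then have "limsup ?f \<le> ereal g" by (rule Limsup_bounded)
    with gl show False by simp
  qed
  with g show "\<exists>g>0. \<forall>N. \<exists>n\<ge>N. g * real n \<le> real (card (A \<inter> {1..n}))" by auto
next
  let ?f = "\<lambda>n. ereal (real (card (A \<inter> {1..n})) / real n)"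
  assume "\<exists>g>0. \<forall>N. \<exists>n\<ge>N. g * real n \<le> real (card (A \<inter> {1..n}))"
  then obtain g where g: "g > 0" and fr: "\<And>N. \<exists>n\<ge>N. g * real n \<le> real (card (A \<inter> {1..n}))"
    by auto
  show "upper_dens A > 0"
  proof (rule ccontr)
    assume "\<not> upper_dens A > 0"
    then have "limsup ?f < ereal g" using g unfolding upper_dens_def
      by (meson ereal_less(2) le_less_trans not_less zero_ereal_def)
    then have "eventually (\<lambda>n. ?f n < ereal g) sequentially" by (rule Limsup_lessD)
    then obtain N where N: "\<And>n. n \<ge> N \<Longrightarrow> ?f n < ereal g" by (auto simp: eventually_sequentially)
    obtain n where n: "n \<ge> max N 1" "g * real n \<le> real (card (A \<inter> {1..n}))" using fr by blast
    then have "ereal g \<le> ?f n" by (simp add: le_divide_eq)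
    with N[of n] n show False by simp
  qed
qed

lemma lower_pos_mono: "A \<subseteq> B \<Longrightarrow> lower_dens A > 0 \<Longrightarrow> lower_dens B > 0"
proof -
  assume AB: "A \<subseteq> B" and "lower_dens A > 0"
  then obtain g N where g: "g > 0" "\<And>n. n \<ge> N \<Longrightarrow> g * real n \<le> real (card (A \<inter> {1..n}))"
    unfolding lower_pos_iff by auto
  have "\<And>n. card (A \<inter> {1..n}) \<le> card (B \<inter> {1..n})" using AB by (intro card_mono) auto
  then have "\<And>n. n \<ge> N \<Longrightarrow> g * real n \<le> real (card (B \<inter> {1..n}))"
    using g(2) by (meson of_nat_le_iff order_trans)
  then show ?thesis unfolding lower_pos_iff using g(1) by auto
qed

lemma upper_pos_mono: "A \<subseteq> B \<Longrightarrow> upper_dens A > 0 \<Longrightarrow> upper_dens B > 0"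
proof -
  assume AB: "A \<subseteq> B" and "upper_dens A > 0"
  then obtain g where g: "g > 0" "\<And>N. \<exists>n\<ge>N. g * real n \<le> real (card (A \<inter> {1..n}))"
    unfolding upper_pos_iff by auto
  have c: "\<And>n. card (A \<inter> {1..n}) \<le> card (B \<inter> {1..n})" using AB by (intro card_mono) auto
  have "\<And>N. \<exists>n\<ge>N. g * real n \<le> real (card (B \<inter> {1..n}))"
    using g(2) c by (meson of_nat_le_iff order_trans)
  then show ?thesis unfolding upper_pos_iff using g(1) by auto
qed

lemma lower_pos_imp_upper_pos: "lower_dens A > 0 \<Longrightarrow> upper_dens A > 0"
  unfolding lower_pos_iff upper_pos_iff by (meson nat_le_linear order_trans)

subsection \<open>Banach densities\<close>

definition hm :: "nat set \<Rightarrow> nat \<Rightarrow> nat" where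
  "hm A l = Max (range (\<lambda>q. card (A \<inter> {q+1..q+l})))"

lemma win_card_le: fixes A :: "nat set" shows "card (A \<inter> {q+1..q+l}) \<le> l"
proof -
  have "card (A \<inter> {q+1..q+l}) \<le> card {q+1..q+l}" by (rule card_mono) auto
  then show ?thesis by simp
qed

lemma hm_finite: fixes A :: "nat set" shows "finite (range (\<lambda>q. card (A \<inter> {q+1..q+l})))"
proof (rule finite_subset)
  show "range (\<lambda>q. card (A \<inter> {q+1..q+l})) \<subseteq> {..l}" using win_card_le by auto
qed simp

lemma hm_ge: "card (A \<inter> {q+1..q+l}) \<le> hm A l"
  unfolding hm_def by (rule Max_ge[OF hm_finite]) auto

lemma hm_attained: "\<exists>q. hm A l = card (A \<inter> {q+1..q+l})"
proof -
  have "hm A l \<in> range (\<lambda>q. card (A \<inter> {q+1..q+l}))"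
    unfolding hm_def by (rule Max_in[OF hm_finite]) auto
  then show ?thesis by auto
qed

lemma hm_le: "hm A l \<le> l"
  using hm_attained[of A l] win_card_le by metis

lemma hm_zero: "hm A 0 = 0"
  using hm_le[of A 0] by simp

lemma hm_mono: "A \<subseteq> B \<Longrightarrow> hm A l \<le> hm B l"
proof -
  assume "A \<subseteq> B"
  obtain q where q: "hm A l = card (A \<inter> {q+1..q+l})" using hm_attained by blast
  have "card (A \<inter> {q+1..q+l}) \<le> card (B \<inter> {q+1..q+l})" using \<open>A \<subseteq> B\<close> by (intro card_mono) auto
  also have "\<dots> \<le> hm B l" by (rule hm_ge)
  finally show ?thesis using q by simp
qed

lemma hm_sub: "hm A (l1 + l2) \<le> hm A l1 + hm A l2"
proof -
  obtain q where q: "hm A (l1 + l2) = card (A \<inter> {q+1..q+(l1+l2)})" using hm_attained by blast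
  have "A \<inter> {q+1..q+(l1+l2)} = (A \<inter> {q+1..q+l1}) \<union> (A \<inter> {(q+l1)+1..(q+l1)+l2})" by auto
  then have "card (A \<inter> {q+1..q+(l1+l2)}) \<le> card (A \<inter> {q+1..q+l1}) + card (A \<inter> {(q+l1)+1..(q+l1)+l2})"
    by (metis card_Un_le)
  also have "\<dots> \<le> hm A l1 + hm A l2" by (intro add_mono hm_ge)
  finally show ?thesis using q by simp
qed

lemma fekete:
  fixes h :: "nat \<Rightarrow> nat"
  assumes sub: "\<And>m n. h (m + n) \<le> h m + h n" and h0: "h 0 = 0"
  shows "(\<lambda>n. real (h n) / real n) \<longlonglongrightarrow> (INF n\<in>{1..}. real (h n) / real n)"
proof -
  let ?I = "INF n\<in>{1..}. real (h n) / real n"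
  have bdd: "bdd_below ((\<lambda>n. real (h n) / real n) ` {1..})"
    by (rule bdd_belowI[of _ 0]) auto
  have low: "\<And>n. n \<ge> 1 \<Longrightarrow> ?I \<le> real (h n) / real n"
    by (rule cINF_lower[OF bdd]) auto
  have mult: "\<And>q k. h (q * k) \<le> q * h k"
  proof -
    fix q k show "h (q * k) \<le> q * h k"
    proof (induction q)
      case 0 then show ?case using h0 by simp
    next
      case (Suc q)
      have "h (Suc q * k) = h (k + q * k)" by simp
      also have "\<dots> \<le> h k + h (q * k)" by (rule sub)
      also have "\<dots> \<le> h k + q * h k" using Suc by simp
      finally show ?case by simp
    qed
  qed
  show ?thesis
  proof (rule LIMSEQ_I)
    fix r :: real assume r: "r > 0"
    have "?I < ?I + r / 2" using r by simp
    then have "\<exists>k\<in>{1::nat..}. real (h k) / real k < ?I + r / 2"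
      using cINF_less_iff[OF _ bdd, of "?I + r / 2"] by auto
    then obtain k where k: "k \<in> {1..}" "real (h k) / real k < ?I + r / 2" by blast
    then have k1: "k \<ge> 1" by simp
    obtain N where N: "real (k * h 1) / r * 2 < real N" using reals_Archimedean2 by blast
    show "\<exists>no. \<forall>n\<ge>no. norm (real (h n) / real n - ?I) < r"
    proof (intro exI[of _ "max N 1"] allI impI)
      fix n assume n: "max N 1 \<le> n"
      then have n1: "n \<ge> 1" and nN: "n \<ge> N" by auto
      define q where "q = n div k"
      define t where "t = n mod k"
      have ndec: "n = q * k + t" unfolding q_def t_def by simp
      have tk: "t < k" unfolding t_def using k1 by simp
      have "h n \<le> h (q * k) + h t" unfolding ndec by (rule sub)
      also have "h t \<le> t * h 1" using mult[of t 1] by simp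
      finally have "h n \<le> q * h k + t * h 1" using mult[of q k] by linarith
      then have hn: "real (h n) \<le> real q * real (h k) + real t * real (h 1)"
        by (metis of_nat_add of_nat_le_iff of_nat_mult)
      have "real q * real k \<le> real n" using ndec by (metis le_add1 of_nat_le_iff of_nat_mult)
      then have "real q * real (h k) \<le> real n * (real (h k) / real k)"
        using k1 by (simp add: field_simps) (metis mult.assoc mult_right_mono of_nat_0_le_iff)
      moreover have "real t * real (h 1) \<le> real k * real (h 1)"
        using tk by (intro mult_right_mono) auto
      ultimately have "real (h n) \<le> real n * (real (h k) / real k) + real k * real (h 1)"
        using hn by linarith
      then have "real (h n) / real n \<le> real (h k) / real k + real k * real (h 1) / real n"
        using n1 by (simp add: field_simps)
      moreover have "real k * real (h 1) / real n < r / 2"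
      proof -
        have "real (k * h 1) < r / 2 * real N" using N r by (simp add: field_simps)
        also have "\<dots> \<le> r / 2 * real n" using nN r by simp
        finally show ?thesis using n1 by (simp add: field_simps)
      qed
      ultimately have "real (h n) / real n < ?I + r" using k by linarith
      moreover have "?I \<le> real (h n) / real n" using low n1 by simp
      ultimately show "norm (real (h n) / real n - ?I) < r" by simp
    qed
  qed
qed

lemma banach_upper_eq: "banach_upper A = ereal (INF n\<in>{1..}. real (hm A n) / real n)"
proof -
  have seq: "(\<lambda>n. SUP m. ereal (real (card (A \<inter> {m+1..m+n})) / real n)) = (\<lambda>n. ereal (real (hm A n) / real n))"
  proof
    fix n
    obtain q where q: "hm A n = card (A \<inter> {q+1..q+n})" using hm_attained by blast
    show "(SUP m. ereal (real (card (A \<inter> {m+1..m+n})) / real n)) = ereal (real (hm A n) / real n)"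
    proof (rule antisym)
      show "(SUP m. ereal (real (card (A \<inter> {m+1..m+n})) / real n)) \<le> ereal (real (hm A n) / real n)"
      proof (rule SUP_least)
        fix m
        have "card (A \<inter> {m+1..m+n}) \<le> hm A n" by (rule hm_ge)
        then show "ereal (real (card (A \<inter> {m+1..m+n})) / real n) \<le> ereal (real (hm A n) / real n)"
          by (simp add: divide_right_mono)
      qed
      show "ereal (real (hm A n) / real n) \<le> (SUP m. ereal (real (card (A \<inter> {m+1..m+n})) / real n))"
        using q by (intro SUP_upper2[of q]) auto
    qed
  qed
  have "(\<lambda>n. ereal (real (hm A n) / real n)) \<longlonglongrightarrow> ereal (INF n\<in>{1..}. real (hm A n) / real n)"
    using fekete[of "hm A"] hm_sub hm_zero by (simp add: lim_ereal)
  then show ?thesis unfolding banach_upper_def seq by (rule limI)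
qed

lemma banach_upper_pos_iff: "banach_upper A > 0 \<longleftrightarrow> (\<exists>g>0. \<forall>l\<ge>1. g * real l \<le> real (hm A l))"
proof
  let ?I = "INF n\<in>{1..}. real (hm A n) / real n"
  have bdd: "bdd_below ((\<lambda>n. real (hm A n) / real n) ` {1..})"
    by (rule bdd_belowI[of _ 0]) auto
  assume "banach_upper A > 0"
  then have I: "?I > 0" unfolding banach_upper_eq by simp
  have "\<forall>l\<ge>1. ?I * real l \<le> real (hm A l)"
  proof (intro allI impI)
    fix l :: nat assume "l \<ge> 1"
    then have "?I \<le> real (hm A l) / real l" by (intro cINF_lower[OF bdd]) auto
    then show "?I * real l \<le> real (hm A l)" using \<open>l \<ge> 1\<close> by (simp add: le_divide_eq)
  qed
  with I show "\<exists>g>0. \<forall>l\<ge>1. g * real l \<le> real (hm A l)" by blast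
next
  let ?I = "INF n\<in>{1..}. real (hm A n) / real n"
  assume "\<exists>g>0. \<forall>l\<ge>1. g * real l \<le> real (hm A l)"
  then obtain g where g: "g > 0" "\<And>l. l \<ge> 1 \<Longrightarrow> g * real l \<le> real (hm A l)" by auto
  have "g \<le> ?I"
  proof (rule cINF_greatest)
    show "{1::nat..} \<noteq> {}" by auto
    fix l :: nat assume "l \<in> {1..}"
    then show "g \<le> real (hm A l) / real l" using g(2)[of l] by (simp add: le_divide_eq)
  qed
  then show "banach_upper A > 0" unfolding banach_upper_eq using g(1) by simp
qed

lemma banach_upper_pos_mono: "A \<subseteq> B \<Longrightarrow> banach_upper A > 0 \<Longrightarrow> banach_upper B > 0"
  unfolding banach_upper_pos_iff using hm_mono
  by (meson of_nat_le_iff order_trans)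

lemma banach_upper_pos_infinite: "banach_upper A > 0 \<Longrightarrow> infinite A"
proof
  assume "banach_upper A > 0" "finite A"
  then obtain g where g: "g > 0" "\<And>l. l \<ge> 1 \<Longrightarrow> g * real l \<le> real (hm A l)"
    unfolding banach_upper_pos_iff by auto
  have le: "\<And>l. hm A l \<le> card A"
  proof -
    fix l
    obtain q where "hm A l = card (A \<inter> {q+1..q+l})" using hm_attained by blast
    also have "\<dots> \<le> card A" using \<open>finite A\<close> by (intro card_mono) auto
    finally show "hm A l \<le> card A" .
  qed
  obtain l :: nat where l: "real (card A) / g < real l" using reals_Archimedean2 by blast
  then have "l \<ge> 1" using g(1) by (cases l) (auto simp: divide_less_0_iff)
  have "real (card A) < g * real l" using l g(1) by (simp add: field_simps)
  also have "\<dots> \<le> real (hm A l)" using g(2) \<open>l \<ge> 1\<close> by simp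
  also have "\<dots> \<le> real (card A)" using le by simp
  finally show False by simp
qed

lemma banach_lower_zero:
  assumes "\<And>l. l \<ge> 1 \<Longrightarrow> \<exists>q. card (A \<inter> {q+1..q+l}) = 0"
  shows "banach_lower A = 0"
proof -
  have seq: "(\<lambda>n. INF m. ereal (real (card (A \<inter> {m+1..m+n})) / real n)) = (\<lambda>n. 0)"
  proof
    fix n :: nat
    show "(INF m. ereal (real (card (A \<inter> {m+1..m+n})) / real n)) = 0"
    proof (cases "n = 0")
      case True then show ?thesis by simp
    next
      case False
      then have "n \<ge> 1" by simp
      then obtain q where q: "card (A \<inter> {q+1..q+n}) = 0" using assms by blast
      show ?thesis
      proof (rule antisym)
        show "(INF m. ereal (real (card (A \<inter> {m+1..m+n})) / real n)) \<le> 0"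
          using q by (intro INF_lower2[of q]) auto
        show "0 \<le> (INF m. ereal (real (card (A \<inter> {m+1..m+n})) / real n))"
          by (rule INF_greatest) simp
      qed
    qed
  qed
  show ?thesis unfolding banach_lower_def seq by (rule limI) simp
qed

lemma nth_concat_replicate:
  "j < R \<Longrightarrow> d < length w \<Longrightarrow> concat (replicate R w) ! (j * length w + d) = w ! d"
proof (induction R arbitrary: j)
  case 0 then show ?case by simp
next
  case (Suc R)
  show ?case
  proof (cases j)
    case 0 then show ?thesis using Suc.prems by (simp add: nth_append)
  next
    case S: (Suc j')
    then have "concat (replicate (Suc R) w) ! (j * length w + d) = concat (replicate R w) ! (j' * length w + d)"
      using Suc.prems by (simp add: nth_append)
    also have "\<dots> = w ! d" using Suc.IH[of j'] Suc.prems S by simp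
    finally show ?thesis .
  qed
qed

locale tc =
  fixes C :: "nat \<Rightarrow> nat list" and A1 :: "nat list" and y :: "nat \<Rightarrow> nat"
  assumes A1_ne: "A1 \<noteq> []"
begin

abbreviation W where "W n \<equiv> Aw C A1 y n"
definition a where "a n = length (W n)"
definition cl where "cl n = length (C (Suc n))"
definition r where "r n = (a n)^2"
definition u where "u n j = a n + cl n + j * Suc n"
definition s where "s n = u n (r n)"
definition T where "T = Tmap C A1 y"

lemma W_Suc: "W (Suc n) = W n @ C (Suc n) @ concat (replicate (r n) (map y [0..<Suc n])) @ W n"
  by (simp add: r_def a_def)

lemma a_Suc: "a (Suc n) = s n + a n"
proof -
  have "length (concat (replicate (r n) (map y [0..<Suc n]))) = r n * Suc n"
    by (simp add: length_concat sum_list_replicate)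
  then show ?thesis unfolding a_def s_def u_def cl_def using W_Suc
    by (simp add: a_def)
qed

lemma a0: "a 0 \<ge> 1" unfolding a_def using A1_ne by (cases A1) auto

lemma s_ge: "s n \<ge> a n + r n * Suc n" unfolding s_def u_def by simp

lemma r_ge: "r n \<ge> a n" unfolding r_def using a0
  by (simp add: power2_eq_square)

lemma a_pos: "a n \<ge> 1"
proof (induction n)
  case 0 then show ?case using a0 .
next
  case (Suc n) then show ?case using a_Suc by simp
qed

lemma a_Suc_ge: "a (Suc n) \<ge> 2 * a n" using a_Suc[of n] s_ge[of n] by simp

lemma a_ge: "a n \<ge> Suc n"
proof (induction n)
  case 0 then show ?case using a0 by simp
next
  case (Suc n) then show ?case using a_Suc_ge[of n] by simp
qed

lemma a_less: "a n < a (Suc n)" using a_Suc_ge[of n] a_pos[of n] by simp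

lemma a_strict_mono: "strict_mono a"
  using a_less by (simp add: strict_mono_Suc_iff)

lemma a_mono: "n \<le> m \<Longrightarrow> a n \<le> a m"
  using a_strict_mono by (simp add: strict_mono_less_eq)

lemma W_prefix: "n \<le> m \<Longrightarrow> i < a n \<Longrightarrow> W m ! i = W n ! i"
proof (induction m)
  case 0 then show ?case by simp
next
  case (Suc m)
  show ?case
  proof (cases "n = Suc m")
    case True then show ?thesis by simp
  next
    case False
    then have nm: "n \<le> m" using Suc by simp
    then have "i < a m" using Suc.prems a_mono by (meson less_le_trans)
    then have "W (Suc m) ! i = W m ! i" by (simp add: nth_append a_def)
    then show ?thesis using Suc.IH nm Suc.prems by simp
  qed
qed

lemma T_prop: "\<forall>m. \<forall>i<length (W m). T i = W m ! i"
proof -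
  define z where "z i = W i ! i" for i
  have zP: "\<forall>m. \<forall>i<length (W m). z i = W m ! i"
  proof (intro allI impI)
    fix m i assume i: "i < length (W m)"
    have ii: "i < a i" using a_ge[of i] by simp
    show "z i = W m ! i"
    proof (cases "i \<le> m")
      case True then show ?thesis unfolding z_def using W_prefix[OF True ii] by simp
    next
      case False
      then have "m \<le> i" by simp
      then show ?thesis unfolding z_def using W_prefix[of m i i] i by (simp add: a_def)
    qed
  qed
  have uniq: "\<And>z'. \<forall>m. \<forall>i<length (W m). z' i = W m ! i \<Longrightarrow> z' = z"
  proof
    fix z' i assume h: "\<forall>m. \<forall>i<length (W m). z' i = W m ! i"
    have ii: "i < length (W i)" using a_ge[of i] by (simp add: a_def)
    have "z' i = W i ! i" using h ii by blast
    moreover have "z i = W i ! i" using zP ii by blast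
    ultimately show "z' i = z i" by simp
  qed
  have "T = z" unfolding T_def Tmap_def
  proof (rule the_equality)
    show "\<forall>m. \<forall>i<length (W m). z i = W m ! i" by (rule zP)
    show "\<And>z'. \<forall>m. \<forall>i<length (W m). z' i = W m ! i \<Longrightarrow> z' = z" by (rule uniq)
  qed
  then show ?thesis using zP by simp
qed

lemma T_W: "i < a n \<Longrightarrow> T i = W n ! i"
  using T_prop by (simp add: a_def)

lemma T_A1: "i < length A1 \<Longrightarrow> T i = A1 ! i"
  using T_W[of i 0] by (simp add: a_def)

lemma T_C: "k < cl n \<Longrightarrow> T (a n + k) = C (Suc n) ! k"
proof -
  assume k: "k < cl n"
  have "a n + k < a (Suc n)" using k a_Suc unfolding s_def u_def by simp
  then have "T (a n + k) = W (Suc n) ! (a n + k)" by (rule T_W)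
  also have "\<dots> = C (Suc n) ! k" using k unfolding W_Suc
    by (simp add: nth_append a_def cl_def)
  finally show ?thesis .
qed

lemma T_Y: "j < r n \<Longrightarrow> d < Suc n \<Longrightarrow> T (u n j + d) = y d"
proof -
  assume j: "j < r n" and d: "d < Suc n"
  have lt: "j * Suc n + d < r n * Suc n"
  proof -
    have "j * Suc n + d < Suc j * Suc n" using d by simp
    also have "\<dots> \<le> r n * Suc n" using j by (intro mult_right_mono) auto
    finally show ?thesis .
  qed
  have "u n j + d < a (Suc n)" using a_Suc s_ge lt unfolding s_def u_def by simp
  then have "T (u n j + d) = W (Suc n) ! (u n j + d)" by (rule T_W)
  also have "\<dots> = concat (replicate (r n) (map y [0..<Suc n])) ! (j * Suc n + d)"
    unfolding W_Suc u_def using lt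
    by (simp add: nth_append a_def cl_def length_concat sum_list_replicate add.assoc)
  also have "\<dots> = map y [0..<Suc n] ! d"
    using nth_concat_replicate[of j "r n" d "map y [0..<Suc n]"] j d by simp
  also have "\<dots> = y d" using d by (simp del: upt_Suc)
  finally show ?thesis .
qed

lemma T_copy: "i < a n \<Longrightarrow> T (s n + i) = T i"
proof -
  assume i: "i < a n"
  have "s n + i < a (Suc n)" using i a_Suc by simp
  then have "T (s n + i) = W (Suc n) ! (s n + i)" by (rule T_W)
  also have "\<dots> = W n ! i"
    unfolding W_Suc using i
    by (simp add: nth_append a_def cl_def length_concat sum_list_replicate s_def u_def r_def)
  also have "\<dots> = T i" using T_W[OF i] by simp
  finally show ?thesis .
qed

lemma set_W:
  assumes "\<And>n. set (C (Suc n)) \<subseteq> S" "set A1 \<subseteq> S" "\<And>i. y i \<in> S"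
  shows "set (W n) \<subseteq> S"
proof (induction n)
  case 0 then show ?case using assms by simp
next
  case (Suc n)
  have "set (concat (replicate (r n) (map y [0..<Suc n]))) \<subseteq> S" using assms(3) by auto
  then show ?case unfolding W_Suc using Suc assms(1) by auto
qed

lemma T_in:
  assumes "\<And>n. set (C (Suc n)) \<subseteq> S" "set A1 \<subseteq> S" "\<And>i. y i \<in> S"
  shows "T i \<in> S"
proof -
  have "i < a i" using a_ge[of i] by simp
  then have "T i = W i ! i" by (rule T_W)
  moreover have "W i ! i \<in> set (W i)" using \<open>i < a i\<close> by (simp add: a_def)
  ultimately show ?thesis using set_W[OF assms] by auto
qed

lemma u_le_s: "j \<le> r n \<Longrightarrow> u n j \<le> s n"
proof -
  assume "j \<le> r n"
  then have "j * Suc n \<le> r n * Suc n" by (rule mult_right_mono) simp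
  then show ?thesis unfolding s_def u_def by linarith
qed

lemma u_Suc: "u n (Suc j) = u n j + Suc n" unfolding u_def by simp

lemma s_mono: "n \<le> m \<Longrightarrow> n \<le> s m"
  using a_ge[of m] unfolding s_def u_def by simp

end

lemma ap_card:
  fixes b d lo hi :: nat
  assumes d: "d > 0" and lh: "lo \<le> hi"
  shows "real (card {j. lo < b + j * d \<and> b + j * d < hi}) * real d \<le> real hi - real lo + real d"
proof (cases "{j. lo < b + j * d \<and> b + j * d < hi} = {}")
  case True
  have "real hi - real lo + real d \<ge> 0" using lh by simp
  then show ?thesis unfolding True by simp
next
  case False
  let ?S = "{j. lo < b + j * d \<and> b + j * d < hi}"
  have fin: "finite ?S"
  proof (rule finite_subset[of _ "{..<hi}"])
    show "?S \<subseteq> {..<hi}"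
    proof
      fix j assume "j \<in> ?S"
      then have "j * d < hi" by auto
      moreover have "j \<le> j * d" using d by simp
      ultimately show "j \<in> {..<hi}" by (meson le_less_trans lessThan_iff)
    qed
  qed simp
  define j0 where "j0 = Min ?S"
  define j1 where "j1 = Max ?S"
  have j0: "j0 \<in> ?S" unfolding j0_def using fin False by (rule Min_in)
  have j1: "j1 \<in> ?S" unfolding j1_def using fin False by (rule Max_in)
  have sub: "?S \<subseteq> {j0..j1}" unfolding j0_def j1_def using fin by auto
  have "card ?S \<le> card {j0..j1}" using sub by (rule card_mono[rotated]) simp
  then have c: "card ?S \<le> j1 + 1 - j0" by simp
  have j01: "j0 \<le> j1" using sub j0 by auto
  have h1: "b + j1 * d < hi" "lo < b + j0 * d" using j0 j1 by auto
  then have "real (b + j1 * d) < real hi" "real lo < real (b + j0 * d)" by (simp_all only: of_nat_less_iff)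
  then have "real j1 * real d - real j0 * real d < real hi - real lo" by simp
  moreover have "real (card ?S) * real d \<le> (real j1 + 1 - real j0) * real d"
    using c j01 by (intro mult_right_mono) auto
  ultimately show ?thesis by (simp add: algebra_simps)
qed

context tc
begin

definition J :: "nat \<Rightarrow> nat \<Rightarrow> nat set" where
  "J M n = {p. \<exists>j\<le>r n. u n j - M \<le> p \<and> p < u n j}"

lemma J_card_win:
  assumes "lo \<le> hi"
  shows "real (card (J M n \<inter> {lo..<hi})) * real (Suc n) \<le> real M * (real hi + real M - real lo + real (Suc n))"
proof -
  let ?S = "{j. j \<le> r n \<and> lo < u n j \<and> u n j < hi + M}"
  have sub: "J M n \<inter> {lo..<hi} \<subseteq> (\<Union>j\<in>?S. {u n j - M..<u n j})"
  proof
    fix p assume "p \<in> J M n \<inter> {lo..<hi}"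
    then obtain j where j: "j \<le> r n" "u n j - M \<le> p" "p < u n j" "lo \<le> p" "p < hi"
      unfolding J_def by auto
    then have "lo < u n j" "u n j < hi + M" by auto
    with j show "p \<in> (\<Union>j\<in>?S. {u n j - M..<u n j})" by auto
  qed
  have finS: "finite ?S" by (rule finite_subset[of _ "{..r n}"]) auto
  have "card (J M n \<inter> {lo..<hi}) \<le> card (\<Union>j\<in>?S. {u n j - M..<u n j})"
    using sub by (rule card_mono[rotated]) (use finS in blast)
  also have "\<dots> \<le> (\<Sum>j\<in>?S. card {u n j - M..<u n j})" by (rule card_UN_le[OF finS])
  also have "\<dots> \<le> (\<Sum>j\<in>?S. M)" by (intro sum_mono) auto
  also have "\<dots> = M * card ?S" by simp
  finally have c1: "card (J M n \<inter> {lo..<hi}) \<le> M * card ?S" .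
  have "card ?S \<le> card {j. lo < (a n + cl n) + j * Suc n \<and> (a n + cl n) + j * Suc n < hi + M}"
  proof (rule card_mono)
    show "finite {j. lo < (a n + cl n) + j * Suc n \<and> (a n + cl n) + j * Suc n < hi + M}"
    proof (rule finite_subset[of _ "{..<hi+M}"])
      show "{j. lo < (a n + cl n) + j * Suc n \<and> (a n + cl n) + j * Suc n < hi + M} \<subseteq> {..<hi+M}"
      proof
        fix j assume "j \<in> {j. lo < (a n + cl n) + j * Suc n \<and> (a n + cl n) + j * Suc n < hi + M}"
        then have "j * Suc n < hi + M" by simp
        moreover have "j \<le> j * Suc n" by simp
        ultimately show "j \<in> {..<hi+M}" by (meson le_less_trans lessThan_iff)
      qed
    qed simp
    show "?S \<subseteq> {j. lo < (a n + cl n) + j * Suc n \<and> (a n + cl n) + j * Suc n < hi + M}"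
      unfolding u_def by blast
  qed
  then have "real (card ?S) * real (Suc n) \<le> real (card {j. lo < (a n + cl n) + j * Suc n \<and> (a n + cl n) + j * Suc n < hi + M}) * real (Suc n)"
    by simp
  also have "\<dots> \<le> real (hi + M) - real lo + real (Suc n)" by (rule ap_card) (use assms in simp_all)
  finally have c2: "real (card ?S) * real (Suc n) \<le> real hi + real M - real lo + real (Suc n)" by simp
  have "real (card (J M n \<inter> {lo..<hi})) * real (Suc n) \<le> real M * real (card ?S) * real (Suc n)"
  proof -
    have "real (card (J M n \<inter> {lo..<hi})) \<le> real M * real (card ?S)"
    proof -
      have "real (card (J M n \<inter> {lo..<hi})) \<le> real (M * card ?S)" using c1 by (simp only: of_nat_le_iff)
      then show ?thesis by (simp only: of_nat_mult)
    qed
    then show ?thesis by (rule mult_right_mono) simp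
  qed
  also have "\<dots> \<le> real M * (real hi + real M - real lo + real (Suc n))"
    using c2 by (simp only: mult.assoc) (rule mult_left_mono, simp_all)
  finally show ?thesis .
qed

lemma J_card: "card (J M n) \<le> M * Suc (r n)"
proof -
  have "J M n = (\<Union>j\<in>{..r n}. {u n j - M..<u n j})" unfolding J_def by auto
  then have "card (J M n) \<le> (\<Sum>j\<in>{..r n}. card {u n j - M..<u n j})"
    by (simp only:) (rule card_UN_le, simp)
  also have "\<dots> \<le> (\<Sum>j\<in>{..r n}. M)" by (intro sum_mono) auto
  finally show ?thesis by (simp add: mult.commute)
qed

lemma J_below: "p \<in> J M n \<Longrightarrow> p < s n"
proof -
  assume "p \<in> J M n"
  then obtain j where "j \<le> r n" "p < u n j" unfolding J_def by blast
  then show "p < s n" using u_le_s[of j n] by linarith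
qed

lemma J_above: "p \<in> J M n \<Longrightarrow> a n - M \<le> p"
  unfolding J_def u_def by auto

end

context tc
begin

lemma card_Bn_le: "B \<subseteq> {..<a n} \<Longrightarrow> card B \<le> a n"
  using card_mono[of "{..<a n}" B] by simp

lemma J_win_bound:
  assumes lh: "lo \<le> hi" and e: "2 * real M \<le> eps * real (Suc n)"
  shows "real (card (J M n \<inter> {lo..<hi})) \<le> eps / 2 * (real hi - real lo) + real M * real M + real M"
proof -
  let ?c = "real (card (J M n \<inter> {lo..<hi}))"
  let ?d = "real (Suc n)"
  let ?L = "real hi - real lo"
  have L0: "?L \<ge> 0" using lh by simp
  have d1: "?d \<ge> 1" by simp
  have h: "?c * ?d \<le> real M * (?L + real M + ?d)"
    using J_card_win[OF lh, of M n] by (simp add: algebra_simps)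
  have "real M * ?L \<le> eps / 2 * ?L * ?d"
  proof -
    have "(eps * ?d / 2 - real M) * ?L \<ge> 0" using e L0 by (intro mult_nonneg_nonneg) auto
    moreover have "(eps * ?d / 2 - real M) * ?L = eps / 2 * ?L * ?d - real M * ?L" by (simp add: algebra_simps)
    ultimately show ?thesis by linarith
  qed
  moreover have "real M * real M \<le> real M * real M * ?d"
    using d1 by (simp add: mult_le_cancel_left1)
  moreover have "(eps / 2 * ?L + real M * real M + real M) * ?d = eps / 2 * ?L * ?d + real M * real M * ?d + real M * ?d"
    by (simp add: algebra_simps)
  moreover have "?c * ?d \<le> real M * ?L + real M * real M + real M * ?d" using h by (simp add: algebra_simps)
  ultimately have "?c * ?d \<le> (eps / 2 * ?L + real M * real M + real M) * ?d"
    by linarith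
  then show ?thesis using d1 by (simp add: mult_le_cancel_right_pos)
qed

lemma J_full_bound:
  assumes e: "2 * real M \<le> eps * real (Suc n)"
  shows "real (card (J M n)) \<le> eps * (real (s n) - real (a n))"
proof -
  have r1: "real (r n) \<ge> 1" using r_ge[of n] a_pos[of n] by simp
  have "real (card (J M n)) \<le> real (M * Suc (r n))"
    using J_card[of M n] by (simp only: of_nat_le_iff)
  also have "\<dots> = real M * (real (r n) + 1)" by (simp add: algebra_simps)
  also have "\<dots> \<le> real M * (2 * real (r n))" using r1 by (intro mult_left_mono) auto
  also have "\<dots> = 2 * real M * real (r n)" by simp
  also have "\<dots> \<le> eps * real (Suc n) * real (r n)" using e r1 by (intro mult_right_mono) auto
  also have "\<dots> \<le> eps * (real (s n) - real (a n))"
  proof -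
    have "real (a n + r n * Suc n) \<le> real (s n)"
      using s_ge[of n] by (simp only: of_nat_le_iff)
    then have "real (r n) * real (Suc n) \<le> real (s n) - real (a n)"
      by (simp add: algebra_simps)
    moreover have "eps \<ge> 0"
    proof -
      have "0 \<le> eps * real (Suc n)" using e by (rule order_trans[rotated]) simp
      then show ?thesis by (simp add: zero_le_mult_iff)
    qed
    ultimately have "eps * (real (r n) * real (Suc n)) \<le> eps * (real (s n) - real (a n))"
      by (rule mult_left_mono)
    then show ?thesis by (simp add: mult_ac)
  qed
  finally show ?thesis .
qed

lemma J_fin: "finite (J M n)"
proof (rule finite_subset[of _ "{..<s n}"])
  show "J M n \<subseteq> {..<s n}" using J_below by blast
qed simp

lemma card_Un3: "finite X1 \<Longrightarrow> finite X2 \<Longrightarrow> finite X3 \<Longrightarrow> card (X1 \<union> X2 \<union> X3) \<le> card X1 + card X2 + card X3"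
proof -
  have "card (X1 \<union> X2 \<union> X3) \<le> card (X1 \<union> X2) + card X3" by (rule card_Un_le)
  moreover have "card (X1 \<union> X2) \<le> card X1 + card X2" by (rule card_Un_le)
  ultimately show ?thesis by linarith
qed

definition ind :: "bool \<Rightarrow> real" where "ind b = (if b then 1 else 0)"

lemma window_main:
  fixes M :: nat and B :: "nat \<Rightarrow> nat set" and eps :: real
  assumes B_sub: "\<And>n. B n \<subseteq> {..<a n}"
    and B_end: "\<And>n. {a n - M..<a n} \<subseteq> B n"
    and B_rec: "\<And>n. B (Suc n) \<subseteq> B n \<union> ((+) (s n)) ` B n \<union> J M n"
    and eps: "eps > 0"
  shows "\<exists>K. \<forall>n lo hi. lo \<le> hi \<longrightarrow> real (card (B n \<inter> {lo..<hi})) \<le> eps * (real hi - real lo) + K"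
proof -
  obtain N :: nat where N: "real (M * M + 2 * M + 1) * 2 / eps < real N"
    using reals_Archimedean2 by blast
  have Nn: "2 * (real M * real M + 2 * real M + 1) \<le> eps * real (Suc n)" if "n \<ge> N" for n
  proof -
    have "real (M * M + 2 * M + 1) * 2 < eps * real N" using N eps by (simp add: field_simps)
    also have "\<dots> \<le> eps * real (Suc n)" using that eps by simp
    finally show ?thesis by simp
  qed
  have e1: "2 * real M \<le> eps * real (Suc n)" if "n \<ge> N" for n
  proof -
    have "0 \<le> real M * real M" "0 \<le> real M" by simp_all
    then have "2 * real M \<le> 2 * (real M * real M + 2 * real M + 1)" by (simp add: algebra_simps)
    also have "\<dots> \<le> eps * real (Suc n)" by (rule Nn[OF that])
    finally show ?thesis .
  qed
  define K0 where "K0 = real (a (Suc N)) + real M * real M + real M"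
  have K0M: "real M * real M + real M \<le> K0" unfolding K0_def by simp
  have K0a: "real (a (Suc N)) \<le> K0" unfolding K0_def by simp
  have cardB: "card (B n) \<le> a n" for n using B_sub by (rule card_Bn_le)
  have fB: "finite (B n)" for n using B_sub[of n] finite_subset by blast
  have Q: "\<forall>lo hi. lo \<le> hi \<longrightarrow> hi \<le> a n \<longrightarrow>
      real (card (B n \<inter> {lo..<hi})) \<le> eps * (real hi - real lo) + K0 * (ind (0 < lo) + ind (hi < a n))"
    if "n \<ge> Suc N" for n
    using that
  proof (induction n rule: nat_induct_at_least)
    case base
    show ?case
    proof (intro allI impI)
      fix lo hi assume lh: "lo \<le> hi" "hi \<le> a (Suc N)"
      have c: "card (B (Suc N) \<inter> {lo..<hi}) \<le> card (B (Suc N))"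
        by (rule card_mono[OF fB]) auto
      show "real (card (B (Suc N) \<inter> {lo..<hi})) \<le> eps * (real hi - real lo) + K0 * (ind (0 < lo) + ind (hi < a (Suc N)))"
      proof (cases "0 < lo \<or> hi < a (Suc N)")
        case True
        then have "1 \<le> ind (0 < lo) + ind (hi < a (Suc N))" unfolding ind_def by auto
        moreover have "K0 \<ge> 0" unfolding K0_def by simp
        ultimately have "K0 \<le> K0 * (ind (0 < lo) + ind (hi < a (Suc N)))"
          using mult_left_mono[of 1 "ind (0 < lo) + ind (hi < a (Suc N))" K0] by simp
        moreover have "real (card (B (Suc N) \<inter> {lo..<hi})) \<le> real (a (Suc N))"
          using c cardB[of "Suc N"] by linarith
        moreover have "eps * (real hi - real lo) \<ge> 0" using eps lh by simp
        ultimately show ?thesis using K0a by linarith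
      next
        case False
        then have lo0: "lo = 0" and hiA: "hi = a (Suc N)" using lh by auto
        have "card (B (Suc N)) \<le> card (B N \<union> ((+) (s N)) ` B N \<union> J M N)"
          by (rule card_mono[OF _ B_rec]) (simp add: fB J_fin)
        also have "\<dots> \<le> card (B N) + card (((+) (s N)) ` B N) + card (J M N)"
          by (rule card_Un3) (simp_all add: fB J_fin)
        also have "\<dots> \<le> a N + a N + M * Suc (r N)"
          using cardB[of N] card_image_le[OF fB[of N], of "(+) (s N)"] J_card[of M N] by linarith
        finally have cB0: "card (B (Suc N)) \<le> a N + a N + M * Suc (r N)" .
        have "real (card (B (Suc N))) \<le> real (a N + a N + M * Suc (r N))"
          using cB0 by (simp only: of_nat_le_iff)
        then have cB: "real (card (B (Suc N))) \<le> 2 * real (a N) + real M * (real (r N) + 1)"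
          by (simp add: algebra_simps)
        have r1: "real (r N) \<ge> 1" using r_ge[of N] a_pos[of N] by simp
        have ar: "real (a N) \<le> real (r N)" using r_ge[of N] by simp
        have "2 * real (a N) + real M * (real (r N) + 1) \<le> (2 + 2 * real M) * real (r N)"
        proof -
          have "real M \<le> real M * real (r N)" using r1 by (simp add: mult_le_cancel_left1)
          then show ?thesis using ar by (simp add: algebra_simps)
        qed
        also have "\<dots> \<le> eps * real (Suc N) * real (r N)"
        proof -
          have "0 \<le> real M * real M" "0 \<le> real M" by simp_all
          then have "2 + 2 * real M \<le> 2 * (real M * real M + 2 * real M + 1)" by (simp add: algebra_simps)
          also have "\<dots> \<le> eps * real (Suc N)" by (rule Nn) simp
          finally have "2 + 2 * real M \<le> eps * real (Suc N)" .
          then show ?thesis using r1 by (intro mult_right_mono) auto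
        qed
        also have "\<dots> \<le> eps * real (a (Suc N))"
        proof -
          have "r N * Suc N \<le> a (Suc N)"
            using s_ge[of N] a_Suc[of N] by simp
          then have "real (r N * Suc N) \<le> real (a (Suc N))" by (simp only: of_nat_le_iff)
          then have "real (r N) * real (Suc N) \<le> real (a (Suc N))" by (simp only: of_nat_mult)
          then have "eps * (real (r N) * real (Suc N)) \<le> eps * real (a (Suc N))"
            using eps by (intro mult_left_mono) auto
          then show ?thesis by (simp add: mult_ac)
        qed
        finally have "real (card (B (Suc N))) \<le> eps * real (a (Suc N))" using cB by linarith
        then show ?thesis using c lo0 hiA unfolding ind_def by simp
      qed
    qed
  next
    case (Suc n)
    have nN: "n \<ge> N" using Suc.hyps by simp
    note IH = Suc.IH
    let ?A = "a n" and ?S = "s n"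
    have A1: "?A \<ge> 1" by (rule a_pos)
    have SA: "?A \<le> ?S" unfolding s_def u_def by simp
    have A'eq: "a (Suc n) = ?S + ?A" by (rule a_Suc)
    show ?case
    proof (intro allI impI)
      fix lo hi assume lh: "lo \<le> hi" "hi \<le> a (Suc n)"
      have sub: "B (Suc n) \<inter> {lo..<hi} \<subseteq> (B n \<inter> {lo..<min hi ?A}) \<union> (J M n \<inter> {max lo ?A..<min hi ?S})
                   \<union> ((+) ?S) ` (B n \<inter> {lo - ?S..<hi - ?S})"
      proof
        fix p assume p: "p \<in> B (Suc n) \<inter> {lo..<hi}"
        then have pB: "p \<in> B n \<union> ((+) ?S) ` B n \<union> J M n" using B_rec by blast
        show "p \<in> (B n \<inter> {lo..<min hi ?A}) \<union> (J M n \<inter> {max lo ?A..<min hi ?S}) \<union> ((+) ?S) ` (B n \<inter> {lo - ?S..<hi - ?S})"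
        proof (cases "p \<in> B n")
          case True
          then have "p < ?A" using B_sub by blast
          then show ?thesis using True p by auto
        next
          case False
          show ?thesis
          proof (cases "p \<in> J M n")
            case True
            have "p < ?S" using J_below[OF True] .
            moreover have "?A - M \<le> p" using J_above[OF True] .
            ultimately have "?A \<le> p"
            proof (intro leI notI)
              assume "p < ?A" "?A - M \<le> p"
              then have "p \<in> {?A - M..<?A}" by simp
              then show False using False B_end[of n] by blast
            qed
            then show ?thesis using True p \<open>p < ?S\<close> by auto
          next
            case False2: False
            then obtain q where q: "q \<in> B n" "p = ?S + q" using pB False by blast
            then have "q \<in> {lo - ?S..<hi - ?S}" using p by auto
            then show ?thesis using q by blast
          qed
        qed
      qed
      have fin1: "finite (B n \<inter> {lo..<min hi ?A})" using fB by blast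
      have fin2: "finite (J M n \<inter> {max lo ?A..<min hi ?S})" by simp
      have fin3: "finite (((+) ?S) ` (B n \<inter> {lo - ?S..<hi - ?S}))" using fB by blast
      have "card (B (Suc n) \<inter> {lo..<hi}) \<le> card ((B n \<inter> {lo..<min hi ?A}) \<union> (J M n \<inter> {max lo ?A..<min hi ?S})
                   \<union> ((+) ?S) ` (B n \<inter> {lo - ?S..<hi - ?S}))"
        by (rule card_mono[OF _ sub]) (use fin1 fin2 fin3 in blast)
      also have "\<dots> \<le> card (B n \<inter> {lo..<min hi ?A}) + card (J M n \<inter> {max lo ?A..<min hi ?S})
                   + card (((+) ?S) ` (B n \<inter> {lo - ?S..<hi - ?S}))"
        by (rule card_Un3) (use fin1 fin2 fin3 in simp_all)
      also have "card (((+) ?S) ` (B n \<inter> {lo - ?S..<hi - ?S})) = card (B n \<inter> {lo - ?S..<hi - ?S})"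
        by (rule card_image) (simp add: inj_on_def)
      finally have tot: "real (card (B (Suc n) \<inter> {lo..<hi})) \<le> real (card (B n \<inter> {lo..<min hi ?A}))
          + real (card (J M n \<inter> {max lo ?A..<min hi ?S})) + real (card (B n \<inter> {lo - ?S..<hi - ?S}))"
        by linarith
      have Kpos: "K0 \<ge> 0" unfolding K0_def by simp
      have ind01: "0 \<le> ind b" "ind b \<le> 1" for b unfolding ind_def by auto
      have P1a: "real (card (B n \<inter> {lo..<min hi ?A})) \<le> eps * (real (min hi ?A) - real lo) + K0 * (ind (0 < lo) + ind (min hi ?A < ?A))"
        if "lo \<le> min hi ?A" using IH that by simp
      have P1b: "card (B n \<inter> {lo..<min hi ?A}) = 0" if "\<not> lo < ?A" using that by simp
      have P3a: "real (card (B n \<inter> {lo - ?S..<hi - ?S})) \<le> eps * (real (hi - ?S) - real (lo - ?S)) + K0 * (ind (0 < lo - ?S) + ind (hi - ?S < ?A))"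
      proof -
        have "lo - ?S \<le> hi - ?S" "hi - ?S \<le> ?A" using lh A'eq by auto
        then show ?thesis using IH by blast
      qed
      have P3b: "card (B n \<inter> {lo - ?S..<hi - ?S}) = 0" if "hi \<le> ?S" using that by simp
      have P2a: "real (card (J M n \<inter> {max lo ?A..<min hi ?S})) \<le> eps / 2 * (real (min hi ?S) - real (max lo ?A)) + real M * real M + real M"
        if "max lo ?A \<le> min hi ?S" using J_win_bound[OF that e1[OF nN]] .
      have P2b: "card (J M n \<inter> {max lo ?A..<min hi ?S}) = 0" if "\<not> max lo ?A < min hi ?S"
      proof -
        have "{max lo ?A..<min hi ?S} = {}" using that by simp
        then show ?thesis by (simp only: Int_empty_right card.empty)
      qed
      have P2c: "real (card (J M n \<inter> {max lo ?A..<min hi ?S})) \<le> eps * (real ?S - real ?A)"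
      proof -
        have "card (J M n \<inter> {max lo ?A..<min hi ?S}) \<le> card (J M n)" by (rule card_mono) (simp_all add: J_fin)
        then show ?thesis using J_full_bound[OF e1[OF nN]] by linarith
      qed
      have ehl: "eps * (real hi - real lo) = eps * (real hi - real lo)" ..
      show "real (card (B (Suc n) \<inter> {lo..<hi})) \<le> eps * (real hi - real lo) + K0 * (ind (0 < lo) + ind (hi < a (Suc n)))"
      proof (cases "hi \<le> ?A")
        case True
        have "real (card (B n \<inter> {lo..<min hi ?A})) \<le> eps * (real hi - real lo) + K0 * (ind (0 < lo) + ind (hi < ?A))"
          using P1a True lh by simp
        moreover have "ind (hi < ?A) \<le> ind (hi < a (Suc n))" unfolding ind_def A'eq using True by auto
        then have "K0 * (ind (0 < lo) + ind (hi < ?A)) \<le> K0 * (ind (0 < lo) + ind (hi < a (Suc n)))"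
          using Kpos by (intro mult_left_mono) auto
        moreover have "card (J M n \<inter> {max lo ?A..<min hi ?S}) = 0" using P2b True by simp
        moreover have "card (B n \<inter> {lo - ?S..<hi - ?S}) = 0" using P3b True SA by simp
        ultimately show ?thesis using tot by linarith
      next
        case hiA: False
        show ?thesis
        proof (cases "?S \<le> lo")
          case True
          have "card (B n \<inter> {lo..<min hi ?A}) = 0" using P1b True SA by simp
          moreover have "card (J M n \<inter> {max lo ?A..<min hi ?S}) = 0" using P2b True by simp
          moreover have "real (hi - ?S) - real (lo - ?S) = real hi - real lo" using True lh by simp
          moreover have "ind (0 < lo - ?S) \<le> ind (0 < lo)" "ind (hi - ?S < ?A) = ind (hi < a (Suc n))"
            unfolding ind_def A'eq using True lh by auto
          moreover have "K0 * (ind (0 < lo - ?S) + ind (hi - ?S < ?A)) \<le> K0 * (ind (0 < lo) + ind (hi < a (Suc n)))"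
            using Kpos calculation(4,5) by (intro mult_left_mono) auto
          moreover have "eps * (real (hi - ?S) - real (lo - ?S)) = eps * (real hi - real lo)"
            using calculation(3) by simp
          ultimately show ?thesis using tot P3a by simp
        next
          case loS: False
          have i0: "ind (0 < lo) = 1" if "lo \<ge> ?A" using that A1 unfolding ind_def by auto
          have i1: "ind (hi < a (Suc n)) = 1" if "hi \<le> ?S" using that A1 A'eq unfolding ind_def by auto
          have i2: "ind (hi - ?S < ?A) = ind (hi < a (Suc n))" unfolding ind_def A'eq using lh A1 by auto
          have M0: "real M * real M + real M \<ge> 0" by simp
          consider (c1) "lo < ?A" "hi \<le> ?S" | (c2) "lo \<ge> ?A" "hi \<le> ?S" | (c3) "lo \<ge> ?A" "hi > ?S" | (c4) "lo < ?A" "hi > ?S"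
            by linarith
          then show ?thesis
          proof cases
            case c1
            have a1: "real (card (B n \<inter> {lo..<min hi ?A})) \<le> eps * (real ?A - real lo) + K0 * ind (0 < lo)"
              using P1a c1 hiA by (simp add: ind_def)
            have a2: "real (card (J M n \<inter> {max lo ?A..<min hi ?S})) \<le> eps / 2 * (real hi - real ?A) + real M * real M + real M"
              using P2a c1 hiA by simp
            have a3: "card (B n \<inter> {lo - ?S..<hi - ?S}) = 0" using P3b c1 by simp
            have a4: "eps / 2 * (real hi - real ?A) \<le> eps * (real hi - real ?A)" using eps hiA by simp
            have eq: "eps * (real hi - real lo) + K0 * (ind (0 < lo) + ind (hi < a (Suc n)))
                = eps * (real ?A - real lo) + eps * (real hi - real ?A) + K0 * ind (0 < lo) + K0"
              using i1[OF c1(2)] by (simp add: algebra_simps)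
            show ?thesis unfolding eq using tot a1 a2 a3 a4 K0M by simp
          next
            case c2
            have a1: "card (B n \<inter> {lo..<min hi ?A}) = 0" using P1b c2 by simp
            have a2: "real (card (J M n \<inter> {max lo ?A..<min hi ?S})) \<le> eps / 2 * (real hi - real lo) + real M * real M + real M"
              using P2a c2 lh by simp
            have a3: "card (B n \<inter> {lo - ?S..<hi - ?S}) = 0" using P3b c2 by simp
            have a4: "eps / 2 * (real hi - real lo) \<le> eps * (real hi - real lo)" using eps lh by simp
            have eq: "eps * (real hi - real lo) + K0 * (ind (0 < lo) + ind (hi < a (Suc n)))
                = eps * (real hi - real lo) + K0 + K0"
              using i1[OF c2(2)] i0[OF c2(1)] by (simp add: algebra_simps)
            show ?thesis unfolding eq using tot a1 a2 a3 a4 K0M Kpos by simp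
          next
            case c3
            have a1: "card (B n \<inter> {lo..<min hi ?A}) = 0" using P1b c3 A1 by simp
            have a2: "real (card (J M n \<inter> {max lo ?A..<min hi ?S})) \<le> eps / 2 * (real ?S - real lo) + real M * real M + real M"
              using P2a c3 loS by simp
            have a3: "real (card (B n \<inter> {lo - ?S..<hi - ?S})) \<le> eps * (real hi - real ?S) + K0 * ind (hi < a (Suc n))"
              using P3a c3 loS i2 by (simp add: ind_def)
            have a4: "eps / 2 * (real ?S - real lo) \<le> eps * (real ?S - real lo)" using eps loS by simp
            have eq: "eps * (real hi - real lo) + K0 * (ind (0 < lo) + ind (hi < a (Suc n)))
                = eps * (real ?S - real lo) + eps * (real hi - real ?S) + K0 + K0 * ind (hi < a (Suc n))"
              using i0[OF c3(1)] by (simp add: algebra_simps)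
            show ?thesis unfolding eq using tot a1 a2 a3 a4 K0M by simp
          next
            case c4
            have a1: "real (card (B n \<inter> {lo..<min hi ?A})) \<le> eps * (real ?A - real lo) + K0 * ind (0 < lo)"
              using P1a c4 hiA by (simp add: ind_def)
            have a3: "real (card (B n \<inter> {lo - ?S..<hi - ?S})) \<le> eps * (real hi - real ?S) + K0 * ind (hi < a (Suc n))"
              using P3a c4 loS i2 by (simp add: ind_def)
            have eq: "eps * (real hi - real lo) + K0 * (ind (0 < lo) + ind (hi < a (Suc n)))
                = eps * (real ?A - real lo) + eps * (real ?S - real ?A) + eps * (real hi - real ?S) + K0 * ind (0 < lo) + K0 * ind (hi < a (Suc n))"
              by (simp add: algebra_simps)
            show ?thesis unfolding eq using tot a1 P2c a3 by simp
          qed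
        qed
      qed
    qed
  qed
  show ?thesis
  proof (intro exI[of _ "2 * K0"] allI impI)
    fix n lo hi :: nat assume lh: "lo \<le> hi"
    show "real (card (B n \<inter> {lo..<hi})) \<le> eps * (real hi - real lo) + 2 * K0"
    proof (cases "n \<le> Suc N")
      case True
      have "card (B n \<inter> {lo..<hi}) \<le> card (B n)" by (rule card_mono[OF fB]) auto
      also have "\<dots> \<le> a n" by (rule cardB)
      also have "\<dots> \<le> a (Suc N)" using True by (rule a_mono)
      finally have "real (card (B n \<inter> {lo..<hi})) \<le> K0" using K0a by linarith
      moreover have "eps * (real hi - real lo) \<ge> 0" using eps lh by simp
      moreover have "K0 \<ge> 0" unfolding K0_def by simp
      ultimately show ?thesis by linarith
    next
      case False
      define hi' where "hi' = min hi (a n)"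
      define lo' where "lo' = min lo hi'"
      have "B n \<inter> {lo..<hi} \<subseteq> B n \<inter> {lo'..<hi'}"
        using B_sub[of n] unfolding lo'_def hi'_def by auto
      then have "card (B n \<inter> {lo..<hi}) \<le> card (B n \<inter> {lo'..<hi'})" by (rule card_mono[rotated]) (use fB in blast)
      moreover have "real (card (B n \<inter> {lo'..<hi'})) \<le> eps * (real hi' - real lo') + K0 * (ind (0 < lo') + ind (hi' < a n))"
      proof -
        have "lo' \<le> hi'" "hi' \<le> a n" unfolding lo'_def hi'_def by auto
        moreover have "n \<ge> Suc N" using False by simp
        ultimately show ?thesis using Q[of n] by blast
      qed
      moreover have "K0 * (ind (0 < lo') + ind (hi' < a n)) \<le> 2 * K0"
        unfolding ind_def K0_def by auto
      moreover have "real hi' - real lo' \<le> real hi - real lo" unfolding lo'_def hi'_def using lh by auto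
      moreover have "eps * (real hi' - real lo') \<le> eps * (real hi - real lo)"
        using eps calculation(4) by (intro mult_left_mono) auto
      ultimately show ?thesis by linarith
    qed
  qed
qed

end

lemma PiL_norun: "x \<in> PiL k L \<Longrightarrow> \<not> (\<forall>j<L. x (m + j) = x m)"
  unfolding PiL_def by auto

lemma PiL_shift: "x \<in> PiL k L \<Longrightarrow> (shift ^^ n) x \<in> PiL k L"
proof -
  assume x: "x \<in> PiL k L"
  have "\<not> (\<forall>j<L. (shift ^^ n) x (m + j) = (shift ^^ n) x m)" for m
    using PiL_norun[OF x, of "n + m"] by (simp add: shift_pow add.assoc)
  moreover have "(shift ^^ n) x \<in> FullShift k" using x unfolding PiL_def FullShift_def by (auto simp: shift_pow)
  ultimately show ?thesis unfolding PiL_def by auto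
qed

lemma FS_shift: "x \<in> FullShift k \<Longrightarrow> (shift ^^ n) x \<in> FullShift k"
  unfolding FullShift_def by (auto simp: shift_pow)

lemma contained_norun:
  assumes "contained (PiL k L) w" "m + L \<le> length w"
  shows "\<not> (\<forall>t<L. w ! (m + t) = w ! m)"
proof
  assume run: "\<forall>t<L. w ! (m + t) = w ! m"
  obtain x where x: "x \<in> PiL k L" "\<And>i. i < length w \<Longrightarrow> x i = w ! i"
    using assms(1) unfolding contained_def by auto
  have "\<forall>t<L. x (m + t) = x m"
  proof (intro allI impI)
    fix t assume "t < L"
    then have "x (m + t) = w ! (m + t)" "x m = w ! m" using x(2) assms(2) by (cases L; auto)+
    then show "x (m + t) = x m" using run \<open>t < L\<close> by simp
  qed
  then show False using PiL_norun[OF x(1)] by blast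
qed

lemma contained_lt:
  assumes "contained (PiL k L) w" "i < length w"
  shows "w ! i < k"
proof -
  obtain x where x: "x \<in> PiL k L" "\<And>i. i < length w \<Longrightarrow> x i = w ! i"
    using assms(1) unfolding contained_def by auto
  have "x i < k" using x(1) unfolding PiL_def FullShift_def by auto
  then show ?thesis using x(2)[OF assms(2)] by simp
qed

locale tc2 = tc C A1 y for C A1 y +
  fixes k L :: nat
  assumes k2: "k \<ge> 2" and L3: "L \<ge> 3"
    and Cenum: "{C n | n. n \<ge> 1} = {w. contained (PiL k L) w}"
    and A1k: "set A1 \<subseteq> {..<k}" and A1nc: "\<not> contained (PiL k L) A1"
    and ratio: "(\<lambda>m. real (cl m) / real (a m)) \<longlonglongrightarrow> 0"
    and yT: "y \<in> Trans (PiL k L)"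
begin

lemma yPi: "y \<in> PiL k L" using yT unfolding Trans_def by auto

lemma y_omega: "omega_lim (PiL k L) y = PiL k L" using yT unfolding Trans_def by auto

lemma C_contained: "n \<ge> 1 \<Longrightarrow> contained (PiL k L) (C n)"
  using Cenum by blast

lemma T_FS: "T \<in> FullShift k"
proof -
  have "T i \<in> {..<k}" for i
  proof (rule T_in)
    show "set (C (Suc n)) \<subseteq> {..<k}" for n
      using contained_lt[OF C_contained[of "Suc n"]] by (auto simp: in_set_conv_nth)
    show "set A1 \<subseteq> {..<k}" by (rule A1k)
    show "y i \<in> {..<k}" for i using yPi unfolding PiL_def FullShift_def by auto
  qed
  then show ?thesis unfolding FullShift_def by auto
qed

lemma T_notPi: "T \<notin> PiL k L"
proof
  assume "T \<in> PiL k L"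
  then have "contained (PiL k L) A1" unfolding contained_def using T_A1 by auto
  with A1nc show False by simp
qed

definition Bad :: "nat \<Rightarrow> nat set" where
  "Bad M = {p. \<exists>i. i + L \<le> M \<and> (\<forall>t<L. T (p + i + t) = T (p + i))}"

lemma bad_mid:
  assumes pB: "p \<in> Bad M" and pA: "a n \<le> p" and pS: "p < s n"
  shows "p \<in> J M n"
proof (rule ccontr)
  assume nJ: "p \<notin> J M n"
  have far: "\<And>j. j \<le> r n \<Longrightarrow> p < u n j \<Longrightarrow> p + M < u n j"
  proof -
    fix j assume "j \<le> r n" "p < u n j"
    then have "\<not> u n j - M \<le> p" using nJ unfolding J_def by auto
    then show "p + M < u n j" by simp
  qed
  obtain i where i: "i + L \<le> M" "\<forall>t<L. T (p + i + t) = T (p + i)" using pB unfolding Bad_def by auto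
  have L0: "L > 0" using L3 by simp
  show False
  proof (cases "p < u n 0")
    case True
    then have pM: "p + M < u n 0" using far by simp
    define m where "m = p - a n + i"
    have len: "m + L \<le> length (C (Suc n))" using pM pA i(1) unfolding m_def u_def cl_def by simp
    have "\<forall>t<L. C (Suc n) ! (m + t) = C (Suc n) ! m"
    proof (intro allI impI)
      fix t assume t: "t < L"
      have "T (a n + (m + t)) = C (Suc n) ! (m + t)" using len t by (intro T_C) (simp add: cl_def)
      moreover have "T (a n + m) = C (Suc n) ! m" using len L0 by (intro T_C) (simp add: cl_def)
      moreover have "a n + (m + t) = p + i + t" "a n + m = p + i" using pA unfolding m_def by auto
      ultimately show "C (Suc n) ! (m + t) = C (Suc n) ! m" using i(2) t by metis
    qed
    then show False using contained_norun[OF C_contained len] by simp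
  next
    case False
    define j where "j = (p - u n 0) div Suc n"
    have uj: "u n j \<le> p" and uj1: "p < u n (Suc j)"
    proof -
      have "j * Suc n \<le> p - u n 0" unfolding j_def by (rule div_times_less_eq_dividend)
      then show "u n j \<le> p" using False unfolding u_def by simp
      have "p - u n 0 < Suc n + j * Suc n" unfolding j_def
        by (rule dividend_less_div_times) simp
      then have "p - u n 0 < Suc j * Suc n" by simp
      then show "p < u n (Suc j)" using False unfolding u_def by simp
    qed
    have jr: "j < r n"
    proof (rule ccontr)
      assume "\<not> j < r n"
      then have "r n * Suc n \<le> j * Suc n" by (intro mult_right_mono) simp_all
      then have "u n (r n) \<le> u n j" unfolding u_def by simp
      then show False using uj pS unfolding s_def by simp
    qed
    have pM: "p + M < u n (Suc j)" using far[of "Suc j"] jr uj1 by simp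
    define m where "m = p - u n j + i"
    have mL: "m + L \<le> Suc n" using pM uj i(1) unfolding m_def u_Suc by simp
    have "\<forall>t<L. y (m + t) = y m"
    proof (intro allI impI)
      fix t assume t: "t < L"
      have "T (u n j + (m + t)) = y (m + t)" using mL t jr by (intro T_Y) auto
      moreover have "T (u n j + m) = y m" using mL L0 jr by (intro T_Y) auto
      moreover have "u n j + (m + t) = p + i + t" "u n j + m = p + i" using uj unfolding m_def by auto
      ultimately show "y (m + t) = y m" using i(2) t by metis
    qed
    then show False using PiL_norun[OF yPi] by blast
  qed
qed

lemma bad_copy:
  assumes "q + M \<le> a n" "s n + q \<in> Bad M"
  shows "q \<in> Bad M"
proof -
  obtain i where i: "i + L \<le> M" "\<forall>t<L. T (s n + q + i + t) = T (s n + q + i)"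
    using assms(2) unfolding Bad_def by auto
  have "\<forall>t<L. T (q + i + t) = T (q + i)"
  proof (intro allI impI)
    fix t assume t: "t < L"
    have "T (s n + (q + i + t)) = T (q + i + t)" using assms(1) i(1) t by (intro T_copy) simp
    moreover have "T (s n + (q + i)) = T (q + i)" using assms(1) i(1) t by (intro T_copy) simp
    ultimately show "T (q + i + t) = T (q + i)" using i(2) t by (simp add: add.assoc)
  qed
  then show ?thesis using i(1) unfolding Bad_def by auto
qed

definition Bn :: "nat \<Rightarrow> nat \<Rightarrow> nat set" where
  "Bn M n = {p. p < a n \<and> p \<in> Bad M} \<union> {a n - M..<a n}"

lemma Bn_rec: "Bn M (Suc n) \<subseteq> Bn M n \<union> ((+) (s n)) ` Bn M n \<union> J M n"
proof
  fix p assume p: "p \<in> Bn M (Suc n)"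
  have A': "a (Suc n) = s n + a n" by (rule a_Suc)
  have SA: "a n \<le> s n" unfolding s_def u_def by simp
  show "p \<in> Bn M n \<union> ((+) (s n)) ` Bn M n \<union> J M n"
  proof (cases "p < a n")
    case True
    have "a n \<le> a (Suc n)" using a_less[of n] by simp
    then show ?thesis using p True unfolding Bn_def by auto
  next
    case pA: False
    show ?thesis
    proof (cases "p < s n")
      case True
      show ?thesis
      proof (cases "p \<in> Bad M")
        case True
        then show ?thesis using bad_mid[OF True] pA \<open>p < s n\<close> by simp
      next
        case False
        then have "p \<in> {a (Suc n) - M..<a (Suc n)}" using p unfolding Bn_def by auto
        then have "s n - M \<le> p" using A' by auto
        then have "p \<in> J M n" unfolding J_def using True by (auto intro!: exI[of _ "r n"] simp: s_def)
        then show ?thesis by simp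
      qed
    next
      case False
      define q where "q = p - s n"
      have pq: "p = s n + q" using False unfolding q_def by simp
      have qA: "q < a n" using p A' pq unfolding Bn_def by auto
      have "q \<in> Bn M n"
      proof (cases "a n - M \<le> q")
        case True
        then show ?thesis using qA unfolding Bn_def by auto
      next
        case False
        then have qM: "q + M \<le> a n" by simp
        have "p \<in> Bad M"
        proof (rule ccontr)
          assume "p \<notin> Bad M"
          then have "p \<in> {a (Suc n) - M..<a (Suc n)}" using p unfolding Bn_def by auto
          then show False using False pq A' by auto
        qed
        then have "q \<in> Bad M" using bad_copy[OF qM] pq by simp
        then show ?thesis using qA unfolding Bn_def by simp
      qed
      then show ?thesis using pq by blast
    qed
  qed
qed

lemma Bad_window:
  assumes eps: "eps > 0"
  shows "\<exists>K. \<forall>lo hi. lo \<le> hi \<longrightarrow> real (card (Bad M \<inter> {lo..<hi})) \<le> eps * (real hi - real lo) + K"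
proof -
  have "\<exists>K. \<forall>n lo hi. lo \<le> hi \<longrightarrow> real (card (Bn M n \<inter> {lo..<hi})) \<le> eps * (real hi - real lo) + K"
  proof (rule window_main[OF _ _ Bn_rec eps])
    show "Bn M n \<subseteq> {..<a n}" for n unfolding Bn_def by auto
    show "{a n - M..<a n} \<subseteq> Bn M n" for n unfolding Bn_def by auto
  qed
  then obtain K where K: "\<And>n lo hi. lo \<le> hi \<Longrightarrow> real (card (Bn M n \<inter> {lo..<hi})) \<le> eps * (real hi - real lo) + K"
    by blast
  show ?thesis
  proof (intro exI[of _ K] allI impI)
    fix lo hi :: nat assume lh: "lo \<le> hi"
    have "hi \<le> a hi" using a_ge[of hi] by simp
    then have "Bad M \<inter> {lo..<hi} \<subseteq> Bn M hi \<inter> {lo..<hi}" unfolding Bn_def by auto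
    then have "card (Bad M \<inter> {lo..<hi}) \<le> card (Bn M hi \<inter> {lo..<hi})" by (rule card_mono[rotated]) simp
    then show "real (card (Bad M \<inter> {lo..<hi})) \<le> eps * (real hi - real lo) + K"
      using K[OF lh, of hi] by linarith
  qed
qed

end

context tc2
begin

lemma T_shift_FS: "(shift ^^ n) T \<in> FullShift k" using FS_shift[OF T_FS] .

lemma y_shift_Pi: "(shift ^^ n) y \<in> PiL k L" using PiL_shift[OF yPi] .

lemma notPi_V_Bad:
  assumes "z \<in> FullShift k" "z \<notin> PiL k L"
  shows "\<exists>M. V T z M \<subseteq> Bad M"
proof -
  obtain n0 where n0: "\<forall>j<L. z (n0 + j) = z n0" using assms unfolding PiL_def by auto
  have "V T z (n0 + L) \<subseteq> Bad (n0 + L)"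
  proof
    fix p assume "p \<in> V T z (n0 + L)"
    then have pz: "\<And>i. i < n0 + L \<Longrightarrow> T (p + i) = z i" unfolding V_def by auto
    have "\<forall>t<L. T (p + n0 + t) = T (p + n0)"
    proof (intro allI impI)
      fix t assume t: "t < L"
      have "T (p + (n0 + t)) = z (n0 + t)" using pz t by simp
      moreover have "T (p + n0) = z n0" using pz[of n0] t by simp
      ultimately show "T (p + n0 + t) = T (p + n0)" using n0 t by (simp add: add.assoc)
    qed
    then show "p \<in> Bad (n0 + L)" unfolding Bad_def by auto
  qed
  then show ?thesis by blast
qed

lemma Bad_sub_not_banach:
  assumes "A \<subseteq> Bad M"
  shows "\<not> banach_upper A > 0"
proof
  assume "banach_upper A > 0"
  then obtain g where g: "g > 0" "\<And>l. l \<ge> 1 \<Longrightarrow> g * real l \<le> real (hm A l)"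
    unfolding banach_upper_pos_iff by auto
  obtain K where K: "\<And>lo hi. lo \<le> hi \<Longrightarrow> real (card (Bad M \<inter> {lo..<hi})) \<le> g / 2 * (real hi - real lo) + K"
    using Bad_window[of "g / 2" M] g(1) by auto
  obtain l :: nat where l: "2 * K / g < real l" using reals_Archimedean2 by blast
  define l' where "l' = max l 1"
  have l'1: "l' \<ge> 1" unfolding l'_def by simp
  have l'l: "2 * K / g < real l'" using l unfolding l'_def by linarith
  obtain q where q: "hm A l' = card (A \<inter> {q+1..q+l'})" using hm_attained by blast
  have "A \<inter> {q+1..q+l'} \<subseteq> Bad M \<inter> {q+1..<q+1+l'}" using assms by auto
  then have "card (A \<inter> {q+1..q+l'}) \<le> card (Bad M \<inter> {q+1..<q+1+l'})" by (rule card_mono[rotated]) simp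
  then have "real (hm A l') \<le> g / 2 * real l' + K" using K[of "q+1" "q+1+l'"] q by simp
  moreover have "g * real l' \<le> real (hm A l')" using g(2) l'1 by simp
  ultimately have "g / 2 * real l' \<le> K" by simp
  then have "real l' \<le> 2 * K / g" using g(1) by (simp add: field_simps)
  then show False using l'l by simp
qed

lemma Bad_sub_not_upper:
  assumes "A \<subseteq> Bad M"
  shows "\<not> upper_dens A > 0"
proof
  assume "upper_dens A > 0"
  then obtain g where g: "g > 0" "\<And>N. \<exists>n\<ge>N. g * real n \<le> real (card (A \<inter> {1..n}))"
    unfolding upper_pos_iff by auto
  obtain K where K: "\<And>lo hi. lo \<le> hi \<Longrightarrow> real (card (Bad M \<inter> {lo..<hi})) \<le> g / 2 * (real hi - real lo) + K"
    using Bad_window[of "g / 2" M] g(1) by auto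
  obtain N :: nat where N: "2 * K / g < real N" using reals_Archimedean2 by blast
  obtain n where n: "n \<ge> N" "g * real n \<le> real (card (A \<inter> {1..n}))" using g(2) by blast
  have "A \<inter> {1..n} \<subseteq> Bad M \<inter> {1..<n+1}" using assms by auto
  then have "card (A \<inter> {1..n}) \<le> card (Bad M \<inter> {1..<n+1})" by (rule card_mono[rotated]) simp
  then have "real (card (A \<inter> {1..n})) \<le> g / 2 * real n + K" using K[of 1 "n+1"] by simp
  with n have "g / 2 * real n \<le> K" by simp
  then have "real n \<le> 2 * K / g" using g(1) by (simp add: field_simps)
  then show False using N n(1) by simp
qed

lemma T_in_omega: "T \<in> omega_lim (FullShift k) T"
  unfolding omega_lim_def
proof (safe)
  show "T \<in> FullShift k" by (rule T_FS)
  fix e :: real assume "e > 0" "finite (visits T (sball (FullShift k) T e))"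
  obtain m where m: "(1/2::real) ^ m < e" using real_arch_pow_inv[of e "1/2"] \<open>e > 0\<close> by auto
  have sub: "V T T (Suc m) \<subseteq> visits T (sball (FullShift k) T e)"
    by (rule V_sub_visits[OF T_shift_FS]) (use m in simp)
  have "infinite (V T T (Suc m))"
    unfolding infinite_nat_iff_unbounded_le
  proof
    fix N
    define n where "n = max N (Suc m)"
    have "N \<le> s n" using s_mono[of N n] unfolding n_def by simp
    moreover have "s n \<in> V T T (Suc m)"
    proof -
      have "Suc m \<le> a n" using a_ge[of n] unfolding n_def by simp
      then have "\<forall>i<Suc m. T (s n + i) = T i" using T_copy by simp
      moreover have "1 \<le> s n" using a_pos[of n] unfolding s_def u_def by simp
      ultimately show ?thesis unfolding V_def by simp
    qed
    ultimately show "\<exists>p\<ge>N. p \<in> V T T (Suc m)" by blast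
  qed
  with sub \<open>finite (visits T (sball (FullShift k) T e))\<close> show False
    using finite_subset by blast
qed

end

definition cnt :: "nat set \<Rightarrow> nat \<Rightarrow> nat" where
  "cnt A t = card (A \<inter> {1..t})"

lemma cnt_split: "cnt A (t + d) = cnt A t + card (A \<inter> {t+1..t+d})"
proof -
  have "A \<inter> {1..t+d} = (A \<inter> {1..t}) \<union> (A \<inter> {t+1..t+d})" by auto
  moreover have "(A \<inter> {1..t}) \<inter> (A \<inter> {t+1..t+d}) = {}" by auto
  ultimately show ?thesis unfolding cnt_def by (simp add: card_Un_disjoint)
qed

lemma card_win_le: "card (A \<inter> {t+1..t+d}) \<le> d"
proof -
  have "card (A \<inter> {t+1..t+d}) \<le> card {t+1..t+d}" by (rule card_mono) auto
  then show ?thesis by simp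
qed

lemma cnt_add_le: "cnt A (t + d) \<le> cnt A t + d"
  using cnt_split[of A t d] card_win_le[of A t d] by simp

lemma cnt_mono: "t \<le> t' \<Longrightarrow> cnt A t \<le> cnt A t'"
  unfolding cnt_def by (rule card_mono) auto

lemma cnt_le: "cnt A t \<le> t"
  using cnt_add_le[of A 0 t] by (simp add: cnt_def)

context tc2
begin

lemma copy_shift:
  assumes j: "j < r n" and d: "1 \<le> d" "d + M \<le> Suc n"
  shows "u n j + d \<in> V T z M \<longleftrightarrow> d \<in> V y z M"
proof -
  have "T (u n j + d + i) = y (d + i)" if "i < M" for i
    using T_Y[OF j, of "d + i"] that d by (simp add: add.assoc)
  then show ?thesis unfolding V_def using d by auto
qed

lemma copy_win:
  assumes j: "j < r n"
  shows "real (card (V T z M \<inter> {u n j + 1..u n j + Suc n})) \<le> real (cnt (V y z M) (Suc n)) + real M"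
    and "real (cnt (V y z M) (Suc n)) \<le> real (card (V T z M \<inter> {u n j + 1..u n j + Suc n})) + real M"
proof -
  let ?p = "Suc n" and ?u = "u n j"
  define q where "q = ?p - M"
  have qp: "q \<le> ?p" "?p \<le> q + M" unfolding q_def by auto
  have img: "V T z M \<inter> {?u + 1..?u + q} = ((+) ?u) ` (V y z M \<inter> {1..q})"
  proof
    show "V T z M \<inter> {?u + 1..?u + q} \<subseteq> ((+) ?u) ` (V y z M \<inter> {1..q})"
    proof
      fix x assume x: "x \<in> V T z M \<inter> {?u + 1..?u + q}"
      define d where "d = x - ?u"
      have xd: "x = ?u + d" "1 \<le> d" "d \<le> q" using x unfolding d_def by auto
      then have "d + M \<le> ?p" unfolding q_def by linarith
      then have "d \<in> V y z M" using copy_shift[OF j xd(2)] x xd(1) by simp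
      then show "x \<in> ((+) ?u) ` (V y z M \<inter> {1..q})" using xd by auto
    qed
    show "((+) ?u) ` (V y z M \<inter> {1..q}) \<subseteq> V T z M \<inter> {?u + 1..?u + q}"
    proof
      fix x assume "x \<in> ((+) ?u) ` (V y z M \<inter> {1..q})"
      then obtain d where d: "x = ?u + d" "d \<in> V y z M" "1 \<le> d" "d \<le> q" by auto
      then have "d + M \<le> ?p" unfolding q_def by linarith
      then have "x \<in> V T z M" using copy_shift[OF j d(3)] d by simp
      then show "x \<in> V T z M \<inter> {?u + 1..?u + q}" using d by auto
    qed
  qed
  have c1: "card (V T z M \<inter> {?u + 1..?u + q}) = cnt (V y z M) q"
    unfolding img cnt_def by (rule card_image) (simp add: inj_on_def)
  have c2: "card (V T z M \<inter> {?u + 1..?u + ?p}) = card (V T z M \<inter> {?u + 1..?u + q}) + card (V T z M \<inter> {(?u + q) + 1..(?u + q) + (?p - q)})"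
    using cnt_split[of "V T z M" ?u q] cnt_split[of "V T z M" ?u ?p] cnt_split[of "V T z M" "?u + q" "?p - q"] qp
    by (simp add: add.assoc)
  have c3: "cnt (V y z M) ?p = cnt (V y z M) q + card (V y z M \<inter> {q + 1..q + (?p - q)})"
    using cnt_split[of "V y z M" q "?p - q"] qp by simp
  have w1: "card (V T z M \<inter> {(?u + q) + 1..(?u + q) + (?p - q)}) \<le> M" using card_win_le[of "V T z M" "?u + q" "?p - q"] qp by linarith
  have w2: "card (V y z M \<inter> {q + 1..q + (?p - q)}) \<le> M" using card_win_le[of "V y z M" q "?p - q"] qp by linarith
  show "real (card (V T z M \<inter> {?u + 1..?u + ?p})) \<le> real (cnt (V y z M) ?p) + real M"
    using c1 c2 c3 w1 w2 by simp
  show "real (cnt (V y z M) ?p) \<le> real (card (V T z M \<inter> {?u + 1..?u + ?p})) + real M"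
    using c1 c2 c3 w1 w2 by simp
qed

lemma copies_count_both:
  "j \<le> r n \<Longrightarrow> real (cnt (V T z M) (u n 0)) + real j * (real (cnt (V y z M) (Suc n)) - real M) \<le> real (cnt (V T z M) (u n j))
    \<and> real (cnt (V T z M) (u n j)) \<le> real (cnt (V T z M) (u n 0)) + real j * (real (cnt (V y z M) (Suc n)) + real M)"
proof (induction j)
  case 0
  show ?case by simp
next
  case (Suc j)
  have jr: "j < r n" using Suc.prems by simp
  have sp: "cnt (V T z M) (u n (Suc j)) = cnt (V T z M) (u n j) + card (V T z M \<inter> {u n j + 1..u n j + Suc n})"
    using cnt_split[of "V T z M" "u n j" "Suc n"] by (simp add: u_Suc)
  have IH: "real (cnt (V T z M) (u n 0)) + real j * (real (cnt (V y z M) (Suc n)) - real M) \<le> real (cnt (V T z M) (u n j))"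
     "real (cnt (V T z M) (u n j)) \<le> real (cnt (V T z M) (u n 0)) + real j * (real (cnt (V y z M) (Suc n)) + real M)"
    using Suc.IH jr by simp_all
  show ?case using IH copy_win[OF jr, of z M] sp by (simp add: algebra_simps)
qed

lemma copies_count:
  assumes "j \<le> r n"
  shows "real (cnt (V T z M) (u n 0)) + real j * (real (cnt (V y z M) (Suc n)) - real M) \<le> real (cnt (V T z M) (u n j))"
    and "real (cnt (V T z M) (u n j)) \<le> real (cnt (V T z M) (u n 0)) + real j * (real (cnt (V y z M) (Suc n)) + real M)"
  using copies_count_both[OF assms] by auto

lemma level_decomp:
  assumes "a m0 \<le> t"
  shows "\<exists>m\<ge>m0. a m \<le> t \<and> t < a (Suc m)"
proof -
  define m' where "m' = (LEAST m. t < a m)"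
  have ex: "t < a t" using a_ge[of t] by simp
  have m't: "t < a m'" unfolding m'_def by (rule LeastI[of _ t]) (rule ex)
  have min: "a m \<le> t" if "m < m'" for m
  proof -
    have "\<not> t < a m" using that unfolding m'_def by (rule not_less_Least)
    then show ?thesis by simp
  qed
  have "m' \<noteq> 0"
  proof
    assume "m' = 0"
    then have "t < a 0" using m't by simp
    moreover have "a 0 \<le> a m0" by (rule a_mono) simp
    ultimately show False using assms by simp
  qed
  then obtain m where m: "m' = Suc m" by (cases m') auto
  have "a m \<le> t" using min m by simp
  moreover have "m \<ge> m0"
  proof (rule ccontr)
    assume "\<not> m \<ge> m0"
    then have "Suc m \<le> m0" by simp
    then have "a (Suc m) \<le> a m0" by (rule a_mono)
    then show False using m't m assms by simp
  qed
  ultimately show ?thesis using m't m by auto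
qed

lemma in_level:
  assumes "a m \<le> t" "t < a (Suc m)"
  shows "t < u m 0 \<or> (\<exists>j<r m. u m j \<le> t \<and> t < u m (Suc j)) \<or> s m \<le> t"
proof (cases "t < u m 0 \<or> s m \<le> t")
  case True then show ?thesis by blast
next
  case False
  define j where "j = (t - u m 0) div Suc m"
  have "j * Suc m \<le> t - u m 0" unfolding j_def by (rule div_times_less_eq_dividend)
  moreover have "u m j = u m 0 + j * Suc m" unfolding u_def by simp
  moreover have "u m 0 \<le> t" using False by simp
  ultimately have uj: "u m j \<le> t" by linarith
  have "t - u m 0 < Suc m + j * Suc m" unfolding j_def by (rule dividend_less_div_times) simp
  moreover have "u m (Suc j) = u m 0 + j * Suc m + Suc m" unfolding u_def by simp
  moreover have "u m 0 \<le> t" using False by simp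
  ultimately have uj1: "t < u m (Suc j)" by linarith
  have "j < r m"
  proof (rule ccontr)
    assume "\<not> j < r m"
    then have "r m * Suc m \<le> j * Suc m" by (intro mult_right_mono) simp_all
    then have "u m (r m) \<le> u m j" unfolding u_def by simp
    then show False using uj False unfolding s_def by simp
  qed
  then show ?thesis using uj uj1 by blast
qed

lemma cl_small:
  assumes "d > 0"
  shows "\<exists>N. \<forall>m\<ge>N. real (cl m) \<le> d * real (a m)"
proof -
  obtain N where N: "\<And>m. m \<ge> N \<Longrightarrow> norm (real (cl m) / real (a m) - 0) < d"
    using LIMSEQ_D[OF ratio assms] by blast
  have "real (cl m) \<le> d * real (a m)" if "m \<ge> N" for m
  proof -
    have ap: "real (a m) > 0" using a_pos[of m] by simp
    have "real (cl m) / real (a m) < d" using N[OF that] by simp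
    then show ?thesis using ap by (simp add: divide_less_eq)
  qed
  then show ?thesis by blast
qed

end

context tc2
begin

lemma lev_real:
  "real (s m) = real (a m) + real (cl m) + real (r m) * real (Suc m)"
  "real (a (Suc m)) = real (s m) + real (a m)"
  "real (r m) = real (a m) * real (a m)"
  "real (u m j) = real (a m) + real (cl m) + real j * real (Suc m)"
  "real (Suc m) \<le> real (a m)"
  "1 \<le> real (a m)"
  "real (a m) \<le> real (r m)"
proof -
  show "real (s m) = real (a m) + real (cl m) + real (r m) * real (Suc m)"
    unfolding s_def u_def by (simp add: algebra_simps)
  show "real (a (Suc m)) = real (s m) + real (a m)" using a_Suc[of m] by simp
  show "real (r m) = real (a m) * real (a m)" unfolding r_def by (simp add: power2_eq_square)
  show "real (u m j) = real (a m) + real (cl m) + real j * real (Suc m)" unfolding u_def by (simp add: algebra_simps)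
  show "real (Suc m) \<le> real (a m)" using a_ge[of m] by (simp only: of_nat_le_iff)
  show "1 \<le> real (a m)" using a_pos[of m] by simp
  show "real (a m) \<le> real (r m)" using r_ge[of m] by (simp only: of_nat_le_iff)
qed

lemma lev_cnt:
  "real (cnt X (a m)) \<le> real (cnt X (u m 0))"
  "real (cnt X (u m 0)) \<le> real (cnt X (a m)) + real (cl m)"
  "real (cnt X (a (Suc m))) \<le> real (cnt X (s m)) + real (a m)"
  "real (cnt X (s m)) \<le> real (cnt X (a (Suc m)))"
  "real (cnt X t) \<le> real t"
  "real (cnt X (a m)) \<le> real (a m)"
proof -
  show "real (cnt X (a m)) \<le> real (cnt X (u m 0))" using cnt_mono[of "a m" "u m 0" X] unfolding u_def by simp
  show "real (cnt X (u m 0)) \<le> real (cnt X (a m)) + real (cl m)" using cnt_add_le[of X "a m" "cl m"] unfolding u_def by simp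
  show "real (cnt X (a (Suc m))) \<le> real (cnt X (s m)) + real (a m)" using cnt_add_le[of X "s m" "a m"] a_Suc[of m] by simp
  show "real (cnt X (s m)) \<le> real (cnt X (a (Suc m)))" using cnt_mono[of "s m" "a (Suc m)" X] a_Suc[of m] by simp
  show "real (cnt X t) \<le> real t" using cnt_le[of X t] by simp
  show "real (cnt X (a m)) \<le> real (a m)" using cnt_le[of X "a m"] by simp
qed

lemma dens_cnt: "card (A \<inter> {1..n}) = cnt A n" unfolding cnt_def ..

lemma lower_T_imp_y:
  assumes "lower_dens (V T z M) > 0"
  shows "lower_dens (V y z M) > 0"
proof -
  obtain g N0 where g: "g > 0" and N0: "\<And>t. t \<ge> N0 \<Longrightarrow> g * real t \<le> real (cnt (V T z M) t)"
    using assms unfolding lower_pos_iff dens_cnt by auto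
  obtain N1 where N1: "\<And>m. m \<ge> N1 \<Longrightarrow> real (cl m) \<le> 1 * real (a m)" using cl_small[of 1] by auto
  obtain N2 :: nat where N2: "2 * (real M + 2) / g < real N2" using reals_Archimedean2 by blast
  have key: "g / 2 * real (Suc m) \<le> real (cnt (V y z M) (Suc m))" if m: "m \<ge> max (max N0 N1) N2" for m
  proof -
    let ?A = "real (a m)" and ?c = "real (cl m)" and ?R = "real (r m)" and ?p = "real (Suc m)"
    let ?S = "real (s m)" and ?cy = "real (cnt (V y z M) (Suc m))"
    have "N0 \<le> s m" using s_mono[of N0 m] m by simp
    then have h1: "g * ?S \<le> real (cnt (V T z M) (s m))" using N0 by simp
    have h2: "real (cnt (V T z M) (s m)) \<le> real (cnt (V T z M) (u m 0)) + real (r m) * (?cy + real M)"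
      using copies_count(2)[of "r m" m z M] unfolding s_def by simp
    have h3: "real (cnt (V T z M) (u m 0)) \<le> ?A + ?c" using lev_cnt(2,6)[of "V T z M" m] by linarith
    have cA: "?c \<le> ?A" using N1[of m] m by simp
    have AR: "?A \<le> ?R" "0 < ?R" using lev_real(6,7)[of m] by auto
    have h4: "?R * ?p \<le> ?S" using lev_real(1)[of m] by simp
    have "g * (?R * ?p) \<le> g * ?S" using h4 g by (intro mult_left_mono) auto
    then have "?R * (g * ?p) \<le> ?R * (2 + ?cy + real M)"
      using h1 h2 h3 cA AR by (simp add: algebra_simps)
    then have h5: "g * ?p \<le> 2 + ?cy + real M" using AR(2) by (simp add: mult_le_cancel_left_pos)
    have "2 * (real M + 2) / g < ?p" using N2 m by simp
    then have "2 * (real M + 2) < g * ?p" using g by (simp add: field_simps)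
    then show ?thesis using h5 by simp
  qed
  show ?thesis unfolding lower_pos_iff dens_cnt
  proof (intro exI[of _ "g / 2"] conjI exI[of _ "Suc (max (max N0 N1) N2)"] allI impI)
    show "g / 2 > 0" using g by simp
    fix n assume n: "Suc (max (max N0 N1) N2) \<le> n"
    then obtain m where nm: "n = Suc m" "m \<ge> max (max N0 N1) N2" by (cases n) auto
    show "g / 2 * real n \<le> real (cnt (V y z M) n)" using key[OF nm(2)] nm(1) by simp
  qed
qed

end

lemma aux1: "(t::real) \<le> U \<Longrightarrow> U = A + c + J + p \<Longrightarrow> c \<le> A \<Longrightarrow> p \<le> A \<Longrightarrow> 0 \<le> J \<Longrightarrow> t \<le> 3 * (A + J)"
  by (smt (verit))

context tc2
begin

lemma upper_y_imp_T:
  assumes "upper_dens (V y z M) > 0"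
  shows "upper_dens (V T z M) > 0"
proof -
  obtain g where g: "g > 0" and fr: "\<And>N. \<exists>n\<ge>N. g * real n \<le> real (cnt (V y z M) n)"
    using assms unfolding upper_pos_iff dens_cnt by auto
  obtain N1 where N1: "\<And>m. m \<ge> N1 \<Longrightarrow> real (cl m) \<le> 1 * real (a m)" using cl_small[of 1] by auto
  obtain N2 :: nat where N2: "4 * real M / g + 2 < real N2" using reals_Archimedean2 by blast
  show ?thesis unfolding upper_pos_iff dens_cnt
  proof (intro exI[of _ "g / 4"] conjI allI)
    show "g / 4 > 0" using g by simp
    fix N
    obtain n where n: "n \<ge> Suc (max N (max N1 N2))" "g * real n \<le> real (cnt (V y z M) n)" using fr by blast
    then obtain m where nm: "n = Suc m" "m \<ge> N" "m \<ge> N1" "m \<ge> N2" by (cases n) auto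
    let ?A = "real (a m)" and ?c = "real (cl m)" and ?R = "real (r m)" and ?p = "real (Suc m)"
    let ?S = "real (s m)" and ?cy = "real (cnt (V y z M) (Suc m))"
    have cy: "g * ?p \<le> ?cy" using n(2) nm(1) by simp
    have h1: "real (cnt (V T z M) (u m 0)) + ?R * (?cy - real M) \<le> real (cnt (V T z M) (s m))"
      using copies_count(1)[of "r m" m z M] unfolding s_def by simp
    have R0: "0 \<le> ?R" by simp
    have h2: "?R * (g * ?p - real M) \<le> ?R * (?cy - real M)" using cy R0 by (intro mult_left_mono) auto
    have cT: "?R * (g * ?p - real M) \<le> real (cnt (V T z M) (s m))" using h1 h2 by simp
    have cA: "?c \<le> ?A" using N1[of m] nm by simp
    have AR: "?A \<le> ?R" using lev_real(7)[of m] .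
    have Sle: "?S \<le> 2 * ?R + ?R * ?p" using lev_real(1)[of m] cA AR by simp
    have "4 * real M / g + 2 < ?p" using N2 nm(4) by simp
    then have "4 * real M + 2 * g < g * ?p" using g by (simp add: field_simps)
    moreover have "real M \<ge> 0" by simp
    ultimately have X: "g / 2 + g * ?p / 4 \<le> g * ?p - real M" using g by linarith
    have "g / 4 * ?S \<le> g / 4 * (2 * ?R + ?R * ?p)" using Sle g by (intro mult_left_mono) auto
    also have "\<dots> = ?R * (g / 2 + g * ?p / 4)" by (simp add: field_simps)
    also have "\<dots> \<le> ?R * (g * ?p - real M)" using X R0 by (intro mult_left_mono) auto
    finally have "g / 4 * ?S \<le> real (cnt (V T z M) (s m))" using cT by simp
    moreover have "N \<le> s m" using s_mono[of N m] nm by simp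
    ultimately show "\<exists>t\<ge>N. g / 4 * real t \<le> real (cnt (V T z M) t)" by blast
  qed
qed


lemma lower_y_imp_T:
  assumes "lower_dens (V y z M) > 0"
  shows "lower_dens (V T z M) > 0"
proof -
  obtain g N0 where g: "g > 0" and N0: "\<And>n. n \<ge> N0 \<Longrightarrow> g * real n \<le> real (cnt (V y z M) n)"
    using assms unfolding lower_pos_iff dens_cnt by auto
  obtain N1 where N1: "\<And>m. m \<ge> N1 \<Longrightarrow> real (cl m) \<le> 1 * real (a m)" using cl_small[of 1] by auto
  obtain N2 :: nat where N2: "2 * real M / g < real N2" using reals_Archimedean2 by blast
  define m1 where "m1 = max (max N0 N1) N2"
  let ?cT = "\<lambda>t. real (cnt (V T z M) t)"
  have cu: "?cT (a m) + real j * (g * real (Suc m) / 2) \<le> ?cT (u m j)" if m: "m \<ge> m1" and j: "j \<le> r m" for m j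
  proof -
    have h1: "?cT (u m 0) + real j * (real (cnt (V y z M) (Suc m)) - real M) \<le> ?cT (u m j)"
      using copies_count(1)[OF j, of z M] by simp
    have cy: "g * real (Suc m) \<le> real (cnt (V y z M) (Suc m))" using N0[of "Suc m"] m unfolding m1_def by simp
    have "2 * real M / g < real (Suc m)" using N2 m unfolding m1_def by simp
    then have "2 * real M < g * real (Suc m)" using g by (simp add: field_simps)
    then have "g * real (Suc m) / 2 \<le> real (cnt (V y z M) (Suc m)) - real M" using cy by linarith
    then have "real j * (g * real (Suc m) / 2) \<le> real j * (real (cnt (V y z M) (Suc m)) - real M)"
      by (intro mult_left_mono) auto
    then show ?thesis using h1 lev_cnt(1)[of "V T z M" m] by linarith
  qed
  have cS: "real (r m) * (g * real (Suc m) / 2) \<le> ?cT (s m)" if m: "m \<ge> m1" for m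
    using cu[OF m, of "r m"] unfolding s_def by simp
  have Abound: "g / 8 * real (a (Suc m)) \<le> real (r m) * (g * real (Suc m) / 2)" if m: "m \<ge> m1" for m
  proof -
    have cA: "real (cl m) \<le> real (a m)" using N1[of m] m unfolding m1_def by simp
    have AR: "real (a m) \<le> real (r m)" by (rule lev_real(7))
    have p1: "1 \<le> real (Suc m)" by simp
    have "real (r m) \<le> real (r m) * real (Suc m)" using p1 by (simp add: mult_le_cancel_left1)
    moreover have "real (a (Suc m)) = 2 * real (a m) + real (cl m) + real (r m) * real (Suc m)"
      using lev_real(1,2)[of m] by simp
    ultimately have "real (a (Suc m)) \<le> 4 * (real (r m) * real (Suc m))"
      using cA AR by linarith
    then have "g / 8 * real (a (Suc m)) \<le> g / 8 * (4 * (real (r m) * real (Suc m)))" using g by (intro mult_left_mono) auto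
    also have "\<dots> = real (r m) * (g * real (Suc m) / 2)" by (simp add: field_simps)
    finally show ?thesis .
  qed
  have Alev: "g / 8 * real (a (Suc m)) \<le> ?cT (a (Suc m))" if m: "m \<ge> m1" for m
    using Abound[OF m] cS[OF m] lev_cnt(4)[of "V T z M" m] by linarith
  show ?thesis unfolding lower_pos_iff dens_cnt
  proof (intro exI[of _ "g / 24"] conjI exI[of _ "a (Suc m1)"] allI impI)
    show "g / 24 > 0" using g by simp
    fix t assume t: "a (Suc m1) \<le> t"
    obtain m where m: "m \<ge> Suc m1" "a m \<le> t" "t < a (Suc m)" using level_decomp[OF t] by blast
    then obtain m' where mm: "m = Suc m'" "m' \<ge> m1" by (cases m) auto
    have cA: "g / 8 * real (a m) \<le> ?cT (a m)" using Alev[OF mm(2)] mm(1) by simp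
    have m1m: "m \<ge> m1" using m by simp
    have cl: "real (cl m) \<le> real (a m)" using N1[of m] m1m unfolding m1_def by simp
    have pA: "real (Suc m) \<le> real (a m)" by (rule lev_real(5))
    have t0: "0 \<le> real t" by simp
    consider (c1) "t < u m 0" | (c2) j where "j < r m" "u m j \<le> t" "t < u m (Suc j)" | (c3) "s m \<le> t"
      using in_level[OF m(2,3)] by blast
    then show "g / 24 * real t \<le> ?cT t"
    proof cases
      case c1
      have "real t \<le> 2 * real (a m)" using c1 cl lev_real(4)[of m 0] by simp
      then have "g / 24 * real t \<le> g / 8 * real (a m)" using g by (simp add: field_simps)
      moreover have "?cT (a m) \<le> ?cT t" using cnt_mono[of "a m" t] m(2) by simp
      ultimately show ?thesis using cA by linarith
    next
      case c2
      have jr: "j \<le> r m" using c2(1) by simp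
      have h: "?cT (a m) + real j * (g * real (Suc m) / 2) \<le> ?cT (u m j)" by (rule cu[OF m1m jr])
      have "real t \<le> real (u m (Suc j))" using c2(3) by simp
      moreover have "real (u m (Suc j)) = real (a m) + real (cl m) + real j * real (Suc m) + real (Suc m)"
        unfolding u_def by (simp add: algebra_simps)
      ultimately have "real t \<le> 3 * (real (a m) + real j * real (Suc m))"
        using cl pA by (intro aux1[of _ "real (u m (Suc j))" _ "real (cl m)" _ "real (Suc m)"]) auto
      then have "g / 24 * real t \<le> g / 24 * (3 * (real (a m) + real j * real (Suc m)))"
        using g by (intro mult_left_mono) auto
      also have "\<dots> = g / 8 * real (a m) + real j * (g * real (Suc m)) / 8" by (simp add: field_simps)
      also have "\<dots> \<le> g / 8 * real (a m) + real j * (g * real (Suc m) / 2)"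
      proof -
        have "0 \<le> real j * (g * real (Suc m))" using g by simp
        moreover have "real j * (g * real (Suc m) / 2) = real j * (g * real (Suc m)) / 2" by simp
        ultimately show ?thesis by linarith
      qed
      finally have "g / 24 * real t \<le> ?cT (u m j)" using h cA by linarith
      moreover have "?cT (u m j) \<le> ?cT t" using cnt_mono[of "u m j" t] c2(2) by simp
      ultimately show ?thesis by linarith
    next
      case c3
      have "g / 24 * real t \<le> g / 8 * real t" using g by simp
      also have "\<dots> \<le> g / 8 * real (a (Suc m))" using m(3) g by (intro mult_left_mono) auto
      also have "\<dots> \<le> real (r m) * (g * real (Suc m) / 2)" by (rule Abound[OF m1m])
      also have "\<dots> \<le> ?cT (s m)" by (rule cS[OF m1m])
      also have "\<dots> \<le> ?cT t" using cnt_mono[of "s m" t] c3 by simp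
      finally show ?thesis .
    qed
  qed
qed


lemma upper_T_imp_y:
  assumes "upper_dens (V T z M) > 0"
  shows "upper_dens (V y z M) > 0"
proof (rule ccontr)
  assume neg: "\<not> upper_dens (V y z M) > 0"
  obtain g where g: "g > 0" and fr: "\<And>N. \<exists>t\<ge>N. g * real t \<le> real (cnt (V T z M) t)"
    using assms unfolding upper_pos_iff dens_cnt by auto
  define G where "G = g / 20"
  have G: "G > 0" unfolding G_def using g by simp
  have "\<not> (\<forall>N. \<exists>n\<ge>N. G * real n \<le> real (cnt (V y z M) n))"
    using neg G unfolding upper_pos_iff dens_cnt by blast
  then obtain N0 where N0': "\<forall>n\<ge>N0. \<not> G * real n \<le> real (cnt (V y z M) n)" by blast
  have N0: "real (cnt (V y z M) n) \<le> G * real n" if "n \<ge> N0" for n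
    using N0' that by force
  obtain N1 where N1: "\<And>m. m \<ge> N1 \<Longrightarrow> real (cl m) \<le> G * real (a m)" using cl_small[OF G] by auto
  obtain N2 :: nat where N2: "(real M + 1) / G < real N2" using reals_Archimedean2 by blast
  define m1 where "m1 = max (max N0 N1) N2"
  let ?cT = "\<lambda>t. real (cnt (V T z M) t)"
  have Gp: "real M \<le> G * real (Suc m)" "1 \<le> G * real (Suc m)" if m: "m \<ge> m1" for m
  proof -
    have "(real M + 1) / G < real (Suc m)" using N2 m unfolding m1_def by simp
    then have "real M + 1 < G * real (Suc m)" using G by (simp add: field_simps)
    then show "real M \<le> G * real (Suc m)" "1 \<le> G * real (Suc m)" by simp_all
  qed
  have cu: "?cT (u m j) \<le> ?cT (a m) + real (cl m) + 2 * (G * (real j * real (Suc m)))" if m: "m \<ge> m1" and j: "j \<le> r m" for m j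
  proof -
    have h1: "?cT (u m j) \<le> ?cT (u m 0) + real j * (real (cnt (V y z M) (Suc m)) + real M)"
      using copies_count(2)[OF j, of z M] by simp
    have cy: "real (cnt (V y z M) (Suc m)) \<le> G * real (Suc m)" using N0[of "Suc m"] m unfolding m1_def by simp
    have "real (cnt (V y z M) (Suc m)) + real M \<le> 2 * (G * real (Suc m))" using cy Gp(1)[OF m] by simp
    then have "real j * (real (cnt (V y z M) (Suc m)) + real M) \<le> real j * (2 * (G * real (Suc m)))"
      by (intro mult_left_mono) auto
    moreover have "real j * (2 * (G * real (Suc m))) = 2 * (G * (real j * real (Suc m)))" by (simp add: mult_ac)
    ultimately show ?thesis using h1 lev_cnt(2)[of "V T z M" m] by linarith
  qed
  have Alev: "?cT (a (Suc m)) \<le> 5 * (G * real (a (Suc m)))" if m: "m \<ge> m1" for m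
  proof -
    let ?A = "real (a m)" and ?R = "real (r m)" and ?p = "real (Suc m)"
    have h1: "?cT (a (Suc m)) \<le> ?cT (a m) + real (cl m) + 2 * (G * (?R * ?p)) + ?A"
      using cu[OF m, of "r m"] lev_cnt(3)[of "V T z M" m] unfolding s_def by simp
    have cl: "real (cl m) \<le> G * ?A" using N1[of m] m unfolding m1_def by simp
    have cA: "?cT (a m) \<le> ?A" by (rule lev_cnt(6))
    have A1: "1 \<le> ?A" by (rule lev_real(6))
    have AR: "?A \<le> ?R" by (rule lev_real(7))
    have Rdef: "?R = ?A * ?A" by (rule lev_real(3))
    have X1: "?A \<le> G * (?R * ?p)"
    proof -
      have "?A * 1 \<le> ?A * (G * ?p)" using Gp(2)[OF m] A1 by (intro mult_left_mono) auto
      also have "\<dots> \<le> ?A * ?A * (G * ?p)" using A1 Gp(2)[OF m] by (intro mult_right_mono) auto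
      finally show ?thesis using Rdef by (simp add: mult_ac)
    qed
    have X2: "G * ?A \<le> G * (?R * ?p)"
    proof -
      have "?R \<le> ?R * ?p" using AR A1 by (simp add: mult_le_cancel_left1)
      then have "?A \<le> ?R * ?p" using AR by linarith
      then show ?thesis using G by (intro mult_left_mono) auto
    qed
    have X3: "?R * ?p \<le> real (a (Suc m))" using lev_real(1,2)[of m] by simp
    have "?cT (a (Suc m)) \<le> 5 * (G * (?R * ?p))"
      using h1 cl cA X1 X2 by linarith
    also have "\<dots> \<le> 5 * (G * real (a (Suc m)))" using X3 G by (intro mult_left_mono) auto
    finally show ?thesis .
  qed
  have main: "?cT t \<le> 10 * (G * real t)" if t: "a (Suc m1) \<le> t" for t
  proof -
    obtain m where m: "m \<ge> Suc m1" "a m \<le> t" "t < a (Suc m)" using level_decomp[OF t] by blast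
    then obtain m' where mm: "m = Suc m'" "m' \<ge> m1" by (cases m) auto
    have cA: "?cT (a m) \<le> 5 * (G * real (a m))" using Alev[OF mm(2)] mm(1) by simp
    have m1m: "m \<ge> m1" using m by simp
    have cl: "real (cl m) \<le> G * real (a m)" using N1[of m] m1m unfolding m1_def by simp
    have pA: "real (Suc m) \<le> real (a m)" by (rule lev_real(5))
    have GpA: "G * real (Suc m) \<le> G * real (a m)" using pA G by (intro mult_left_mono) auto
    have At: "real (a m) \<le> real t" using m(2) by simp
    have GAt: "G * real (a m) \<le> G * real t" using At G by (intro mult_left_mono) auto
    have Gt0: "0 \<le> G * real t" using G by simp
    consider (c1) "t < u m 0" | (c2) j where "j < r m" "u m j \<le> t" "t < u m (Suc j)" | (c3) "s m \<le> t"
      using in_level[OF m(2,3)] by blast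
    then show ?thesis
    proof cases
      case c1
      have "?cT t \<le> ?cT (u m 0)" using cnt_mono[of t "u m 0"] c1 by simp
      moreover have "?cT (u m 0) \<le> ?cT (a m) + real (cl m)" by (rule lev_cnt(2))
      ultimately show ?thesis using cA cl GAt Gt0 by linarith
    next
      case c2
      have jr: "Suc j \<le> r m" using c2(1) by simp
      have h: "?cT t \<le> ?cT (u m (Suc j))" using cnt_mono[of t "u m (Suc j)"] c2(3) by simp
      have h2: "?cT (u m (Suc j)) \<le> ?cT (a m) + real (cl m) + 2 * (G * (real (Suc j) * real (Suc m)))" by (rule cu[OF m1m jr])
      have eq: "G * (real (Suc j) * real (Suc m)) = G * (real j * real (Suc m)) + G * real (Suc m)"
        by (simp add: algebra_simps)
      have "real (a m) + real j * real (Suc m) \<le> real (u m j)" using lev_real(4)[of m j] by simp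
      also have "\<dots> \<le> real t" using c2(2) by simp
      finally have "G * (real (a m) + real j * real (Suc m)) \<le> G * real t" using G by (intro mult_left_mono) auto
      then have h3: "G * real (a m) + G * (real j * real (Suc m)) \<le> G * real t" by (simp add: algebra_simps)
      have "0 \<le> G * (real j * real (Suc m))" using G by simp
      then show ?thesis using h h2 eq h3 cA cl GpA Gt0 by linarith
    next
      case c3
      have "?cT t \<le> ?cT (a (Suc m))" using cnt_mono[of t "a (Suc m)"] m(3) by simp
      moreover have "?cT (a (Suc m)) \<le> 5 * (G * real (a (Suc m)))" by (rule Alev[OF m1m])
      moreover have "G * real (a (Suc m)) \<le> 2 * (G * real t)"
      proof -
        have "real (a (Suc m)) = real (s m) + real (a m)" by (rule lev_real(2))
        moreover have "real (a m) \<le> real (s m)" using lev_real(1)[of m] by simp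
        moreover have "real (s m) \<le> real t" using c3 by simp
        ultimately have "real (a (Suc m)) \<le> 2 * real t" by simp
        then have "G * real (a (Suc m)) \<le> G * (2 * real t)" using G by (intro mult_left_mono) auto
        then show ?thesis by simp
      qed
      ultimately show ?thesis by linarith
    qed
  qed
  obtain t where t: "t \<ge> max (a (Suc m1)) 1" "g * real t \<le> ?cT t" using fr by blast
  have "?cT t \<le> 10 * (G * real t)" using main t(1) by simp
  then have "g * real t \<le> g / 2 * real t" using t(2) unfolding G_def by simp
  moreover have "real t \<ge> 1" using t(1) by simp
  ultimately show False using g by (simp add: field_simps)
qed

end

definition P1 :: "nat \<Rightarrow> nat" where "P1 i = i mod 2"
definition P2 :: "nat \<Rightarrow> nat" where "P2 i = (if i mod 3 = 2 then 1 else 0)"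

lemma P1_alt: "P1 (q + i) \<noteq> P1 (q + i + 1)"
  unfolding P1_def by (simp add: mod_Suc)

lemma P2_eq: "\<exists>i<3. P2 (q + i) = P2 (q + i + 1)"
proof -
  have c: "q mod 3 = 0 \<or> q mod 3 = 1 \<or> q mod 3 = 2" by arith
  show ?thesis
  proof (cases "q mod 3 = 0")
    case True
    have "(q + 0) mod 3 \<noteq> 2" "(q + 0 + 1) mod 3 \<noteq> 2" using True by (simp, presburger)
    then have "P2 (q + 0) = P2 (q + 0 + 1)" unfolding P2_def by simp
    then show ?thesis by (intro exI[where x=0]) auto
  next
    case F1: False
    show ?thesis
    proof (cases "q mod 3 = 1")
      case True
      have "(q + 2) mod 3 \<noteq> 2" "(q + 2 + 1) mod 3 \<noteq> 2" using True by presburger+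
      then have "P2 (q + 2) = P2 (q + 2 + 1)" unfolding P2_def by simp
      then show ?thesis by (intro exI[where x=2]) auto
    next
      case False
      then have "q mod 3 = 2" using c F1 by simp
      then have "(q + 1) mod 3 \<noteq> 2" "(q + 1 + 1) mod 3 \<noteq> 2" by presburger+
      then have "P2 (q + 1) = P2 (q + 1 + 1)" unfolding P2_def by simp
      then show ?thesis by (intro exI[where x=1]) auto
    qed
  qed
qed

lemma P_disj: "\<not> ((\<forall>i<4. P1 (q1 + i) = z i) \<and> (\<forall>i<4. P2 (q2 + i) = z i))"
proof
  assume h: "(\<forall>i<4. P1 (q1 + i) = z i) \<and> (\<forall>i<4. P2 (q2 + i) = z i)"
  obtain i where i: "i < 3" "P2 (q2 + i) = P2 (q2 + i + 1)" using P2_eq by blast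
  have i4: "i < 4" "i + 1 < 4" using i(1) by simp_all
  have e1: "P2 (q2 + i) = z i" "P2 (q2 + (i + 1)) = z (i + 1)" using h i4 by blast+
  have e2: "P1 (q1 + i) = z i" "P1 (q1 + (i + 1)) = z (i + 1)" using h i4 by blast+
  have "z i = z (i + 1)" using e1 i(2) by (simp add: add.assoc)
  moreover have "P1 (q1 + i) \<noteq> P1 (q1 + i + 1)" by (rule P1_alt)
  ultimately show False using e2 by (simp add: add.assoc)
qed

lemma P2_val: "P2 n = (if n mod 3 = 2 then 1 else 0)" unfolding P2_def ..

lemma P1_Pi: "k \<ge> 2 \<Longrightarrow> L \<ge> 3 \<Longrightarrow> P1 \<in> PiL k L"
proof -
  assume k: "k \<ge> 2" and L: "L \<ge> 3"
  have "P1 n < k" for n unfolding P1_def using k by simp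
  moreover have "\<not> (\<forall>j<L. P1 (m + j) = P1 m)" for m
  proof
    assume h: "\<forall>j<L. P1 (m + j) = P1 m"
    have "1 < L" using L by simp
    then have "P1 (m + 1) = P1 m" using h by blast
    then show False using P1_alt[of m 0] by simp
  qed
  ultimately show ?thesis unfolding PiL_def FullShift_def by auto
qed

lemma P2_Pi: "k \<ge> 2 \<Longrightarrow> L \<ge> 3 \<Longrightarrow> P2 \<in> PiL k L"
proof -
  assume k: "k \<ge> 2" and L: "L \<ge> 3"
  have "P2 n < k" for n unfolding P2_def using k by simp
  moreover have "\<not> (\<forall>j<L. P2 (m + j) = P2 m)" for m
  proof
    assume h: "\<forall>j<L. P2 (m + j) = P2 m"
    have "1 < L" "2 < L" using L by simp_all
    then have h1: "P2 (m + 1) = P2 m" and h2: "P2 (m + 2) = P2 m" using h by blast+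
    show False
    proof (cases "m mod 3 = 2")
      case True
      then have "(m + 1) mod 3 = 0" by presburger
      then have "P2 (m + 1) = 0" "P2 m = 1" using True by (simp_all add: P2_val)
      then show False using h1 by simp
    next
      case False
      then have "m mod 3 = 0 \<or> m mod 3 = 1" by presburger
      then have "(m + 1) mod 3 = 2 \<or> (m + 2) mod 3 = 2" by presburger
      moreover have "P2 m = 0" using False by (simp add: P2_val)
      ultimately show False using h1 h2 by (auto simp: P2_val)
    qed
  qed
  ultimately show ?thesis unfolding PiL_def FullShift_def by auto
qed

context tc2
begin

lemma hm_embed: "hm (V y z M) l \<le> hm (V T z M) l"
proof -
  obtain q where q: "hm (V y z M) l = card (V y z M \<inter> {q+1..q+l})" using hm_attained by blast
  define n where "n = q + l + M"
  have r0: "0 < r n" using r_ge[of n] a_pos[of n] by simp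
  let ?u = "u n 0"
  have img: "V T z M \<inter> {?u + q + 1..?u + q + l} = ((+) ?u) ` (V y z M \<inter> {q+1..q+l})"
  proof
    show "V T z M \<inter> {?u + q + 1..?u + q + l} \<subseteq> ((+) ?u) ` (V y z M \<inter> {q+1..q+l})"
    proof
      fix x assume x: "x \<in> V T z M \<inter> {?u + q + 1..?u + q + l}"
      define d where "d = x - ?u"
      have xd: "x = ?u + d" "1 \<le> d" "d + M \<le> Suc n" "q + 1 \<le> d" "d \<le> q + l" using x unfolding d_def n_def by auto
      then have "d \<in> V y z M" using copy_shift[OF r0 xd(2,3)] x by simp
      then show "x \<in> ((+) ?u) ` (V y z M \<inter> {q+1..q+l})" using xd by auto
    qed
    show "((+) ?u) ` (V y z M \<inter> {q+1..q+l}) \<subseteq> V T z M \<inter> {?u + q + 1..?u + q + l}"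
    proof
      fix x assume "x \<in> ((+) ?u) ` (V y z M \<inter> {q+1..q+l})"
      then obtain d where d: "x = ?u + d" "d \<in> V y z M" "q + 1 \<le> d" "d \<le> q + l" by auto
      then have "1 \<le> d" "d + M \<le> Suc n" unfolding n_def by auto
      then have "x \<in> V T z M" using copy_shift[OF r0] d by simp
      then show "x \<in> V T z M \<inter> {?u + q + 1..?u + q + l}" using d by auto
    qed
  qed
  have "card (V y z M \<inter> {q+1..q+l}) = card (V T z M \<inter> {?u + q + 1..?u + q + l})"
    unfolding img by (rule card_image[symmetric]) (simp add: inj_on_def)
  also have "\<dots> \<le> hm (V T z M) l" using hm_ge[of "V T z M" "?u + q" l] by (simp add: add.assoc)
  finally show ?thesis using q by simp
qed

lemma banach_y_imp_T: "banach_upper (V y z M) > 0 \<Longrightarrow> banach_upper (V T z M) > 0"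
  unfolding banach_upper_pos_iff using hm_embed by (meson of_nat_le_iff order_trans)

lemma stretch_y:
  assumes "P \<in> PiL k L"
  shows "\<exists>p\<ge>1. \<forall>i<l. y (p + i) = P i"
proof -
  have "P \<in> omega_lim (PiL k L) y" using y_omega assms by simp
  then have "infinite (visits y (sball (PiL k L) P ((1/2)^l)))" unfolding omega_lim_def by auto
  then obtain p where "p \<in> visits y (sball (PiL k L) P ((1/2)^l))" using infinite_imp_nonempty by blast
  then have "p \<in> V y P l" using visits_ball_sub[of "(1/2)^l" l y "PiL k L" P] by auto
  then show ?thesis unfolding V_def by auto
qed

lemma stretch_T:
  assumes "P \<in> PiL k L"
  shows "\<exists>p\<ge>1. \<forall>i<l. T (p + i) = P i"
proof -
  obtain p where p: "p \<ge> 1" "\<forall>i<l. y (p + i) = P i" using stretch_y[OF assms] by blast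
  define n where "n = p + l"
  have r0: "0 < r n" using r_ge[of n] a_pos[of n] by simp
  have "\<forall>i<l. T (u n 0 + p + i) = P i"
  proof (intro allI impI)
    fix i assume i: "i < l"
    have "p + i < Suc n" using i unfolding n_def by simp
    then have "T (u n 0 + (p + i)) = y (p + i)" by (rule T_Y[OF r0])
    then show "T (u n 0 + p + i) = P i" using p(2) i by (simp add: add.assoc)
  qed
  moreover have "u n 0 + p \<ge> 1" using p by simp
  ultimately show ?thesis by blast
qed

end

lemma banach_lower_omega_empty:
  assumes s1: "\<And>l. \<exists>p\<ge>1. \<forall>i<l. x (p + i) = P1 i"
    and s2: "\<And>l. \<exists>p\<ge>1. \<forall>i<l. x (p + i) = P2 i"
  shows "omega_xi X banach_lower x = {}"
proof (rule ccontr)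
  assume "omega_xi X banach_lower x \<noteq> {}"
  then obtain z where z: "z \<in> omega_xi X banach_lower x" by blast
  obtain P where P: "\<And>l. \<exists>p\<ge>1. \<forall>i<l. x (p + i) = P i" and Pz: "\<And>q. \<not> (\<forall>i<4. P (q + i) = z i)"
  proof (cases "\<exists>q1. \<forall>i<4. P1 (q1 + i) = z i")
    case True
    then obtain q1 where q1: "\<forall>i<4. P1 (q1 + i) = z i" by blast
    show ?thesis
    proof (rule that[of P2])
      show "\<exists>p\<ge>1. \<forall>i<l. x (p + i) = P2 i" for l by (rule s2)
      show "\<not> (\<forall>i<4. P2 (q + i) = z i)" for q using P_disj[of q1 z q] q1 by blast
    qed
  next
    case False
    show ?thesis
    proof (rule that[of P1])
      show "\<exists>p\<ge>1. \<forall>i<l. x (p + i) = P1 i" for l by (rule s1)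
      show "\<not> (\<forall>i<4. P1 (q + i) = z i)" for q using False by blast
    qed
  qed
  let ?A = "visits x (sball X z ((1/2)^4))"
  have "banach_lower ?A = 0"
  proof (rule banach_lower_zero)
    fix l :: nat assume l: "l \<ge> 1"
    obtain p where p: "p \<ge> 1" "\<forall>i<l + 4. x (p + i) = P i" using P by blast
    have "?A \<inter> {(p - 1) + 1..(p - 1) + l} = {}"
    proof (rule ccontr)
      assume "?A \<inter> {(p - 1) + 1..(p - 1) + l} \<noteq> {}"
      then obtain n where n0: "n \<in> ?A" "n \<in> {(p - 1) + 1..(p - 1) + l}" by blast
      then have n: "n \<in> ?A" "p \<le> n" "n < p + l" using p(1) l by auto
      have "n \<in> V x z 4" using n(1) visits_ball_sub[of "(1/2)^4" 4 x X z] by auto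
      then have xz: "\<forall>i<4. x (n + i) = z i" unfolding V_def by auto
      define d where "d = n - p"
      have "\<forall>i<4. P (d + i) = z i"
      proof (intro allI impI)
        fix i :: nat assume i: "i < 4"
        have "d + i < l + 4" using n i unfolding d_def by simp
        then have "x (p + (d + i)) = P (d + i)" using p(2) by blast
        moreover have "p + (d + i) = n + i" using n(2) unfolding d_def by simp
        ultimately show "P (d + i) = z i" using xz i by simp
      qed
      then show False using Pz by blast
    qed
    then show "\<exists>q. card (?A \<inter> {q+1..q+l}) = 0" by (metis card.empty)
  qed
  moreover have "banach_lower ?A > 0" using z unfolding omega_xi_def by simp
  ultimately show False by simp
qed

context tc2
begin

lemma om_T:
  assumes "\<And>A B. A \<subseteq> B \<Longrightarrow> \<xi> A > 0 \<Longrightarrow> \<xi> B > 0"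
  shows "omega_xi (FullShift k) \<xi> T = {z \<in> FullShift k. \<forall>m. \<xi> (V T z m) > 0}"
  by (rule omega_char[OF assms T_shift_FS])

lemma om_y:
  assumes "\<And>A B. A \<subseteq> B \<Longrightarrow> \<xi> A > 0 \<Longrightarrow> \<xi> B > 0"
  shows "omega_xi (PiL k L) \<xi> y = {z \<in> PiL k L. \<forall>m. \<xi> (V y z m) > 0}"
  by (rule omega_char[OF assms y_shift_Pi])

lemma Pi_FS: "PiL k L \<subseteq> FullShift k" unfolding PiL_def by auto

lemma E_lower: "omega_xi (FullShift k) lower_dens T = omega_xi (PiL k L) lower_dens y"
proof -
  have "{z \<in> FullShift k. \<forall>m. lower_dens (V T z m) > 0} = {z \<in> PiL k L. \<forall>m. lower_dens (V y z m) > 0}"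
  proof (intro set_eqI iffI)
    fix z assume z: "z \<in> {z \<in> FullShift k. \<forall>m. lower_dens (V T z m) > 0}"
    have zP: "z \<in> PiL k L"
    proof (rule ccontr)
      assume "z \<notin> PiL k L"
      then obtain M where "V T z M \<subseteq> Bad M" using notPi_V_Bad z by blast
      then have "\<not> upper_dens (V T z M) > 0" by (rule Bad_sub_not_upper)
      moreover have "upper_dens (V T z M) > 0" using z lower_pos_imp_upper_pos by blast
      ultimately show False by simp
    qed
    then show "z \<in> {z \<in> PiL k L. \<forall>m. lower_dens (V y z m) > 0}" using z lower_T_imp_y by blast
  next
    fix z assume z: "z \<in> {z \<in> PiL k L. \<forall>m. lower_dens (V y z m) > 0}"
    then show "z \<in> {z \<in> FullShift k. \<forall>m. lower_dens (V T z m) > 0}" using Pi_FS lower_y_imp_T by blast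
  qed
  then show ?thesis using om_T[OF lower_pos_mono] om_y[OF lower_pos_mono] by simp
qed

lemma E_upper: "omega_xi (FullShift k) upper_dens T = omega_xi (PiL k L) upper_dens y"
proof -
  have "{z \<in> FullShift k. \<forall>m. upper_dens (V T z m) > 0} = {z \<in> PiL k L. \<forall>m. upper_dens (V y z m) > 0}"
  proof (intro set_eqI iffI)
    fix z assume z: "z \<in> {z \<in> FullShift k. \<forall>m. upper_dens (V T z m) > 0}"
    have zP: "z \<in> PiL k L"
    proof (rule ccontr)
      assume "z \<notin> PiL k L"
      then obtain M where "V T z M \<subseteq> Bad M" using notPi_V_Bad z by blast
      then have "\<not> upper_dens (V T z M) > 0" by (rule Bad_sub_not_upper)
      moreover have "upper_dens (V T z M) > 0" using z by simp
      ultimately show False by simp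
    qed
    then show "z \<in> {z \<in> PiL k L. \<forall>m. upper_dens (V y z m) > 0}" using z upper_T_imp_y by blast
  next
    fix z assume z: "z \<in> {z \<in> PiL k L. \<forall>m. upper_dens (V y z m) > 0}"
    then show "z \<in> {z \<in> FullShift k. \<forall>m. upper_dens (V T z m) > 0}" using Pi_FS upper_y_imp_T by blast
  qed
  then show ?thesis using om_T[OF upper_pos_mono] om_y[OF upper_pos_mono] by simp
qed

lemma E_banach:
  assumes H: "omega_xi (PiL k L) banach_upper y = PiL k L"
  shows "omega_xi (FullShift k) banach_upper T = PiL k L"
proof -
  have Hy: "banach_upper (V y z m) > 0" if "z \<in> PiL k L" for z m
  proof -
    have "z \<in> {z \<in> PiL k L. \<forall>m. banach_upper (V y z m) > 0}"
      using that H om_y[OF banach_upper_pos_mono] by simp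
    then show ?thesis by simp
  qed
  have "{z \<in> FullShift k. \<forall>m. banach_upper (V T z m) > 0} = PiL k L"
  proof (intro set_eqI iffI)
    fix z assume z: "z \<in> {z \<in> FullShift k. \<forall>m. banach_upper (V T z m) > 0}"
    show "z \<in> PiL k L"
    proof (rule ccontr)
      assume "z \<notin> PiL k L"
      then obtain M where "V T z M \<subseteq> Bad M" using notPi_V_Bad z by blast
      then have "\<not> banach_upper (V T z M) > 0" by (rule Bad_sub_not_banach)
      moreover have "banach_upper (V T z M) > 0" using z by simp
      ultimately show False by simp
    qed
  next
    fix z assume z: "z \<in> PiL k L"
    have "banach_upper (V T z m) > 0" for m using Hy[OF z] by (rule banach_y_imp_T)
    moreover have "z \<in> FullShift k" using z Pi_FS by blast
    ultimately show "z \<in> {z \<in> FullShift k. \<forall>m. banach_upper (V T z m) > 0}" by simp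
  qed
  then show ?thesis using om_T[OF banach_upper_pos_mono] by simp
qed

lemma E_blower: "omega_xi (FullShift k) banach_lower T = {}" "omega_xi (PiL k L) banach_lower y = {}"
proof -
  show "omega_xi (FullShift k) banach_lower T = {}"
    by (rule banach_lower_omega_empty) (intro stretch_T P1_Pi P2_Pi k2 L3)+
  show "omega_xi (PiL k L) banach_lower y = {}"
    by (rule banach_lower_omega_empty) (intro stretch_y P1_Pi P2_Pi k2 L3)+
qed

lemma E_strict:
  assumes H: "omega_xi (PiL k L) banach_upper y = PiL k L"
  shows "omega_xi (FullShift k) banach_upper T \<subset> omega_lim (FullShift k) T"
proof
  show "omega_xi (FullShift k) banach_upper T \<subseteq> omega_lim (FullShift k) T"
    unfolding omega_xi_def omega_lim_def using banach_upper_pos_infinite by blast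
  show "omega_xi (FullShift k) banach_upper T \<noteq> omega_lim (FullShift k) T"
    using E_banach[OF H] T_in_omega T_notPi by blast
qed

lemma main_tc2:
  assumes "sat_case (PiL k L) y i False"
  shows "sat_case (FullShift k) T i True"
proof -
  obtain r1 r2 r3 where cp: "case_pattern i = (r1, r2, r3)" by (cases "case_pattern i") auto
  have h: "rel_step r1 (omega_xi (PiL k L) banach_lower y) (omega_xi (PiL k L) lower_dens y)"
       "rel_step r2 (omega_xi (PiL k L) lower_dens y) (omega_xi (PiL k L) upper_dens y)"
       "rel_step r3 (omega_xi (PiL k L) upper_dens y) (omega_xi (PiL k L) banach_upper y)"
       "rel_step False (omega_xi (PiL k L) banach_upper y) (omega_lim (PiL k L) y)"
    using assms cp unfolding sat_case_def by simp_all
  have H: "omega_xi (PiL k L) banach_upper y = PiL k L" using h(4) y_omega unfolding rel_step_def by simp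
  have Hb: "omega_xi (PiL k L) banach_upper y = omega_xi (FullShift k) banach_upper T" using E_banach[OF H] H by simp
  show ?thesis unfolding sat_case_def cp
    using h(1,2,3) E_blower E_lower E_upper Hb E_strict[OF H] by (simp add: rel_step_def)
qed

end

theorem lemma5p4:
  fixes k L i :: nat and C :: "nat \<Rightarrow> nat list" and A1 :: "nat list" and y :: "nat \<Rightarrow> nat"
  assumes "k \<ge> 2" and "L \<ge> 3"
    and "{C n | n. n \<ge> 1} = {w. contained (PiL k L) w}"
    and "set A1 \<subseteq> {..<k}" and "\<not> contained (PiL k L) A1"
    and "(\<lambda>m. real (length (C (Suc m))) / real (length (Aw C A1 y m))) \<longlonglongrightarrow> 0"
    and "y \<in> Trans (PiL k L)"
    and "i \<in> {1..6}"
    and "sat_case (PiL k L) y i False"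
  shows "sat_case (FullShift k) (Tmap C A1 y) i True"
proof -
  have ne: "A1 \<noteq> []"
  proof
    assume "A1 = []"
    moreover have "contained (PiL k L) []" unfolding contained_def using P1_Pi[OF assms(1,2)] by auto
    ultimately show False using assms(5) by simp
  qed
  interpret tc C A1 y by unfold_locales (rule ne)
  interpret tc2 C A1 y k L
  proof unfold_locales
    show "(\<lambda>m. real (cl m) / real (a m)) \<longlonglongrightarrow> 0" using assms(6) unfolding cl_def a_def .
  qed (use assms in auto)
  show ?thesis using main_tc2[OF assms(9)] unfolding T_def .
qed

end
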